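(* Let $d,n\ge2$, $\gamma=[1^{(0)}\;2^{(0)}\;\ldots\;(n-1)^{(0)}][n^{(0)}]_{d-1}$, and for $i\in[n]$, $s\in\{0,\ldots,d-1\}$ let $R_i^{(s)}=\{u\in\mathcal{NC}_{G(d,d,n)}(\gamma):u(1^{(0)})=i^{(s)}\}$. Then $R_i^{(s)}$ is empty if and only if either $i=1$ and $2\le s<d$, or $2\le i<n$ and $1\le s<d-1$.
   Context: $G(d,d,n)$ is the group of $n\times n$ monomial matrices with $d$-th roots of unity as nonzero entries whose product is $1$, viewed as permutations of colored integers $k^{(s)}=\zeta^se_k$ ($\zeta=e^{2\pi i/d}$, $k\in[n]$, $s\in\mathbb{Z}/d$); products composed right to left. For $s\in[d-1]$ the balanced cycle $[k_1^{(t_1)}\ldots k_r^{(t_r)}]_s$ is the cycle $(k_1^{(t_1)}\ldots k_r^{(t_r)}\,k_1^{(t_1+s)}\ldots k_r^{(t_r+s)}\ldots k_1^{(t_1+(d-1)s)}\ldots k_r^{(t_r+(d-1)s)})$; subscript $1$ omitted. With $T$ the reflections, $\ell_T$ the absolute length, and $u\le_Tv$ iff $\ell_T(v)=\ell_T(u)+\ell_T(u^{-1}v)$, $\gamma$ is a Coxeter element and $\mathcal{NC}_{G(d,d,n)}(\gamma)=\{u:\varepsilon\le_Tu\le_T\gamma\}$. *)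

theory Defs
  imports Complex_Main "HOL-Combinatorics.Permutations"
begin

text \<open>Colored integers k^(s) are pairs (k, s) with k in [n] = {1..n} and s in {0..<d}
  (colors read modulo d).  Products compose right to left,
  i.e. the product u v is the function composition u o v.\<close>

definition cdom :: "nat \<Rightarrow> nat \<Rightarrow> (nat \<times> nat) set" where
  "cdom d n = {1..n} \<times> {0..<d}"

definition Gddn :: "nat \<Rightarrow> nat \<Rightarrow> ((nat \<times> nat) \<Rightarrow> (nat \<times> nat)) set" where
  "Gddn d n = {u. (\<forall>x. x \<notin> cdom d n \<longrightarrow> u x = x) \<and>
     (\<exists>(\<sigma>::nat\<Rightarrow>nat) (c::nat\<Rightarrow>nat). \<sigma> permutes {1..n} \<and> (\<Sum>k\<in>{1..n}. c k) mod d = (0::nat) \<and>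
        (\<forall>k\<in>{1..n}. \<forall>s<d. u (k, s) = (\<sigma> k, (s + c k) mod d)))}"

definition ginv :: "nat \<Rightarrow> nat \<Rightarrow> ((nat \<times> nat) \<Rightarrow> (nat \<times> nat)) \<Rightarrow> ((nat \<times> nat) \<Rightarrow> (nat \<times> nat))" where
  "ginv d n u = (\<lambda>x. if x \<in> cdom d n then inv_into (cdom d n) u x else x)"

text \<open>The monomial matrix of u (rows/columns indexed by 1..n): u(e_j) = zeta^(c_j) e_(sigma j),
  with zeta = exp(2 pi i / d).\<close>
definition zeta :: "nat \<Rightarrow> complex" where
  "zeta d = cis (2 * pi / real d)"

definition gmat :: "nat \<Rightarrow> ((nat \<times> nat) \<Rightarrow> (nat \<times> nat)) \<Rightarrow> nat \<Rightarrow> nat \<Rightarrow> complex" where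
  "gmat d u i j = (if fst (u (j, 0)) = i then zeta d ^ snd (u (j, 0)) else 0)"

text \<open>Reflections: elements g whose matrix M satisfies rank(M - I) = 1, i.e. M - I is a
  nonzero outer product v w^T (g fixes a hyperplane pointwise and g is not the identity).\<close>
definition reflections :: "nat \<Rightarrow> nat \<Rightarrow> ((nat \<times> nat) \<Rightarrow> (nat \<times> nat)) set" where
  "reflections d n = {g \<in> Gddn d n. \<exists>v w :: nat \<Rightarrow> complex.
      (\<exists>i\<in>{1..n}. v i \<noteq> 0) \<and> (\<exists>j\<in>{1..n}. w j \<noteq> 0) \<and>
      (\<forall>i\<in>{1..n}. \<forall>j\<in>{1..n}. gmat d g i j - (if i = j then 1 else 0) = v i * w j)}"

definition abs_len :: "nat \<Rightarrow> nat \<Rightarrow> ((nat \<times> nat) \<Rightarrow> (nat \<times> nat)) \<Rightarrow> nat" where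
  "abs_len d n u = (LEAST k. \<exists>ts. length ts = k \<and> set ts \<subseteq> reflections d n \<and>
                                  foldr (\<circ>) ts id = u)"

definition abs_le :: "nat \<Rightarrow> nat \<Rightarrow> ((nat \<times> nat) \<Rightarrow> (nat \<times> nat)) \<Rightarrow> ((nat \<times> nat) \<Rightarrow> (nat \<times> nat)) \<Rightarrow> bool" where
  "abs_le d n u v \<longleftrightarrow> abs_len d n v = abs_len d n u + abs_len d n (ginv d n u \<circ> v)"

text \<open>Balanced cycle [k_1^(t_1) ... k_r^(t_r)]_s, given as the list [(k_1,t_1),...,(k_r,t_r)]
  (the k_j distinct): k_j^(c) maps to k_(j+1)^(c - t_j + t_(j+1)) for j < r and
  k_r^(c) maps to k_1^(c - t_r + t_1 + s), colors mod d; all other points are fixed.\<close>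
definition bcycle :: "nat \<Rightarrow> nat \<Rightarrow> (nat \<times> nat) list \<Rightarrow> (nat \<times> nat) \<Rightarrow> (nat \<times> nat)" where
  "bcycle d s ks = (\<lambda>(k, c).
     if c < d \<and> (\<exists>j<length ks. fst (ks ! j) = k) then
       (let j = (LEAST j. j < length ks \<and> fst (ks ! j) = k) in
        if Suc j < length ks then
          (fst (ks ! Suc j),
           nat ((int c - int (snd (ks ! j)) + int (snd (ks ! Suc j))) mod int d))
        else
          (fst (ks ! 0),
           nat ((int c - int (snd (ks ! j)) + int (snd (ks ! 0)) + int s) mod int d)))
     else (k, c))"

definition gamma :: "nat \<Rightarrow> nat \<Rightarrow> (nat \<times> nat) \<Rightarrow> (nat \<times> nat)" where
  "gamma d n = bcycle d 1 (map (\<lambda>k. (k, 0)) [1..<n]) \<circ> bcycle d (d - 1) [(n, 0)]"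

definition NC :: "nat \<Rightarrow> nat \<Rightarrow> ((nat \<times> nat) \<Rightarrow> (nat \<times> nat)) set" where
  "NC d n = {u \<in> Gddn d n. abs_le d n id u \<and> abs_le d n u (gamma d n)}"

definition Rset :: "nat \<Rightarrow> nat \<Rightarrow> nat \<Rightarrow> nat \<Rightarrow> ((nat \<times> nat) \<Rightarrow> (nat \<times> nat)) set" where
  "Rset d n i s = {u \<in> NC d n. u (1, 0) = (i, s)}"

end

theory Submission
  imports Defs "Jordan_Normal_Form.Determinant"
begin

section \<open>Roots of unity\<close>

lemma zeta_pow_d: "d > 0 \<Longrightarrow> zeta d ^ d = 1"
  unfolding zeta_def by (simp add: DeMoivre)

lemma zeta_pow_mod: "d > 0 \<Longrightarrow> zeta d ^ (a mod d) = zeta d ^ a"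
proof -
  assume d: "d > 0"
  have "zeta d ^ a = zeta d ^ (d * (a div d) + a mod d)" by simp
  also have "\<dots> = (zeta d ^ d) ^ (a div d) * zeta d ^ (a mod d)" by (simp only: power_add power_mult)
  also have "\<dots> = zeta d ^ (a mod d)" using zeta_pow_d[OF d] by simp
  finally show ?thesis by simp
qed

lemma zeta_pow_cis: "zeta d ^ a = cis (2 * pi * real a / real d)"
  unfolding zeta_def by (simp add: DeMoivre mult.commute mult.left_commute)

lemma zeta_pow_inj: assumes "a < d" "b < d" "zeta d ^ a = zeta d ^ b" shows "a = b"
proof -
  have d: "d > 0" using assms by auto
  have "bij_betw (\<lambda>k. cis (2 * pi * real k / real d)) {..<d} {z. z ^ d = 1}"
    by (rule bij_betw_roots_unity) (use d in auto)
  hence "inj_on (\<lambda>k. cis (2 * pi * real k / real d)) {..<d}" by (rule bij_betw_imp_inj_on)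
  thus ?thesis using assms by (auto simp: zeta_pow_cis inj_on_def)
qed

lemma zeta_pow_eq1: assumes "d > 0" shows "zeta d ^ a = 1 \<longleftrightarrow> d dvd a"
proof -
  have "zeta d ^ a = 1 \<longleftrightarrow> zeta d ^ (a mod d) = zeta d ^ 0" using zeta_pow_mod[OF assms] by simp
  also have "\<dots> \<longleftrightarrow> a mod d = 0"
    using zeta_pow_inj[of "a mod d" d 0] assms by auto
  finally show ?thesis by auto
qed



definition mkG :: "nat \<Rightarrow> nat \<Rightarrow> (nat \<Rightarrow> nat) \<Rightarrow> (nat \<Rightarrow> nat) \<Rightarrow> (nat \<times> nat \<Rightarrow> nat \<times> nat)" where
  "mkG d n \<sigma> c = (\<lambda>(k, s). if k \<in> {1..n} \<and> s < d then (\<sigma> k, (s + c k) mod d) else (k, s))"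

lemma mod_cancel_nat: "(a + c) mod d = (b + c) mod (d::nat) \<Longrightarrow> a mod d = b mod d"
  by (simp add: nat_mod_eq_iff)

lemma mkG_in: "k \<in> {1..n} \<Longrightarrow> s < d \<Longrightarrow> mkG d n \<sigma> c (k, s) = (\<sigma> k, (s + c k) mod d)"
  by (simp add: mkG_def)

lemma mkG_out: "\<not> (k \<in> {1..n} \<and> s < d) \<Longrightarrow> mkG d n \<sigma> c (k, s) = (k, s)"
  unfolding mkG_def by auto

lemma mkG_in_G:
  assumes "\<sigma> permutes {1..n}" "(\<Sum>k\<in>{1..n}. c k) mod d = 0"
  shows "mkG d n \<sigma> c \<in> Gddn d n"
  unfolding Gddn_def mem_Collect_eq
proof (intro conjI allI impI)
  fix x :: "nat \<times> nat" assume "x \<notin> cdom d n"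
  thus "mkG d n \<sigma> c x = x" by (cases x) (auto simp: cdom_def mkG_def)
next
  show "\<exists>\<sigma>' c'. \<sigma>' permutes {1..n} \<and> (\<Sum>k\<in>{1..n}. c' k) mod d = 0 \<and>
        (\<forall>k\<in>{1..n}. \<forall>s<d. mkG d n \<sigma> c (k, s) = (\<sigma>' k, (s + c' k) mod d))"
    using assms by (intro exI[of _ \<sigma>] exI[of _ c]) (auto simp: mkG_in)
qed

lemma G_mkG:
  assumes "g \<in> Gddn d n"
  obtains \<sigma> c where "\<sigma> permutes {1..n}" "(\<Sum>k\<in>{1..n}. c k) mod d = 0" "g = mkG d n \<sigma> c"
proof -
  from assms obtain \<sigma> c where s: "\<sigma> permutes {1..n}" "(\<Sum>k\<in>{1..n}. c k) mod d = 0"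
    "\<forall>k\<in>{1..n}. \<forall>s<d. g (k, s) = (\<sigma> k, (s + c k) mod d)"
    and out: "\<forall>x. x \<notin> cdom d n \<longrightarrow> g x = x"
    unfolding Gddn_def mem_Collect_eq by (elim conjE exE) metis
  have "g = mkG d n \<sigma> c"
  proof
    fix x :: "nat \<times> nat"
    obtain k s where x: "x = (k, s)" by (cases x)
    show "g x = mkG d n \<sigma> c x"
      using s(3) out unfolding x mkG_def cdom_def by auto
  qed
  thus ?thesis by (rule that[OF s(1) s(2)])
qed

lemma mkG_comp:
  assumes "d > 0" "\<forall>k\<in>{1..n}. \<sigma>2 k \<in> {1..n}"
  shows "mkG d n \<sigma>1 c1 \<circ> mkG d n \<sigma>2 c2 = mkG d n (\<sigma>1 \<circ> \<sigma>2) (\<lambda>k. c2 k + c1 (\<sigma>2 k))"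
proof
  fix x :: "nat \<times> nat"
  obtain k s where x: "x = (k, s)" by (cases x)
  show "(mkG d n \<sigma>1 c1 \<circ> mkG d n \<sigma>2 c2) x = mkG d n (\<sigma>1 \<circ> \<sigma>2) (\<lambda>k. c2 k + c1 (\<sigma>2 k)) x"
  proof (cases "k \<in> {1..n} \<and> s < d")
    case True
    hence "\<sigma>2 k \<in> {1..n}" using assms by auto
    moreover have "(s + c2 k) mod d < d" using assms by auto
    ultimately show ?thesis using True unfolding x
      by (simp add: mkG_in mod_add_left_eq add.assoc)
  qed (simp add: x mkG_out)
qed

lemma mkG_cong:
  assumes "\<forall>k\<in>{1..n}. \<sigma> k = \<sigma>' k \<and> c k mod d = c' k mod d"
  shows "mkG d n \<sigma> c = mkG d n \<sigma>' c'"
proof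
  fix x :: "nat \<times> nat"
  obtain k s where x: "x = (k, s)" by (cases x)
  show "mkG d n \<sigma> c x = mkG d n \<sigma>' c' x"
  proof (cases "k \<in> {1..n} \<and> s < d")
    case True
    hence "\<sigma> k = \<sigma>' k" "c k mod d = c' k mod d" using assms by auto
    hence "(s + c k) mod d = (s + c' k) mod d" by (metis mod_add_right_eq)
    thus ?thesis using True \<open>\<sigma> k = \<sigma>' k\<close> unfolding x by (simp add: mkG_in)
  qed (simp add: x mkG_out)
qed

lemma mkG_id:
  assumes "\<forall>k\<in>{1..n}. \<sigma> k = k \<and> c k mod d = 0"
  shows "mkG d n \<sigma> c = id"
proof
  fix x :: "nat \<times> nat"
  obtain k s where x: "x = (k, s)" by (cases x)
  show "mkG d n \<sigma> c x = id x"
  proof (cases "k \<in> {1..n} \<and> s < d")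
    case True
    hence "\<sigma> k = k" "c k mod d = 0" using assms by auto
    hence "(s + c k) mod d = s mod d" by (metis mod_add_right_eq add_0_right)
    thus ?thesis using True \<open>\<sigma> k = k\<close> unfolding x by (simp add: mkG_in)
  qed (simp add: x mkG_out)
qed

lemma Gddn_comp:
  assumes "d > 0" "g \<in> Gddn d n" "h \<in> Gddn d n"
  shows "g \<circ> h \<in> Gddn d n"
proof -
  obtain \<sigma>1 c1 where 1: "\<sigma>1 permutes {1..n}" "(\<Sum>k\<in>{1..n}. c1 k) mod d = 0" "g = mkG d n \<sigma>1 c1"
    by (rule G_mkG[OF assms(2)])
  obtain \<sigma>2 c2 where 2: "\<sigma>2 permutes {1..n}" "(\<Sum>k\<in>{1..n}. c2 k) mod d = 0" "h = mkG d n \<sigma>2 c2"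
    by (rule G_mkG[OF assms(3)])
  have m: "\<forall>k\<in>{1..n}. \<sigma>2 k \<in> {1..n}" by (metis 2(1) permutes_in_image)
  have "(\<Sum>k\<in>{1..n}. c1 k) = sum (c1 \<circ> \<sigma>2) {1..n}" by (rule sum.permute[OF 2(1)])
  also have "\<dots> = (\<Sum>k\<in>{1..n}. c1 (\<sigma>2 k))" by (simp only: comp_def)
  finally have e: "(\<Sum>k\<in>{1..n}. c1 (\<sigma>2 k)) = (\<Sum>k\<in>{1..n}. c1 k)" by (rule sym)
  have "(\<Sum>k\<in>{1..n}. c2 k + c1 (\<sigma>2 k)) = (\<Sum>k\<in>{1..n}. c2 k) + (\<Sum>k\<in>{1..n}. c1 k)"
    by (simp only: sum.distrib e)
  hence s: "(\<Sum>k\<in>{1..n}. c2 k + c1 (\<sigma>2 k)) mod d = 0" using 1(2) 2(2)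
    by (metis add_0 mod_0 mod_add_eq)
  have "mkG d n \<sigma>1 c1 \<circ> mkG d n \<sigma>2 c2 \<in> Gddn d n"
    unfolding mkG_comp[OF assms(1) m]
    by (rule mkG_in_G[OF permutes_compose[OF 2(1) 1(1)] s])
  thus ?thesis using 1(3) 2(3) by simp
qed
lemma bij_mkG:
  assumes "d > 0" "\<sigma> permutes {1..n}"
  shows "bij_betw (mkG d n \<sigma> c) (cdom d n) (cdom d n)"
proof -
  have inj: "inj_on (mkG d n \<sigma> c) (cdom d n)"
  proof (rule inj_onI)
    fix x y assume x: "x \<in> cdom d n" and y: "y \<in> cdom d n" and e: "mkG d n \<sigma> c x = mkG d n \<sigma> c y"
    obtain k s where xx: "x = (k, s)" by (cases x)
    obtain k' s' where yy: "y = (k', s')" by (cases y)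
    have k: "k \<in> {1..n}" "s < d" "k' \<in> {1..n}" "s' < d" using x y xx yy by (auto simp: cdom_def)
    have "\<sigma> k = \<sigma> k'" using e k by (simp add: xx yy mkG_in)
    hence kk: "k = k'" using assms(2) by (metis permutes_inj inj_eq)
    have "(s + c k) mod d = (s' + c k) mod d" using e k kk by (simp add: xx yy mkG_in)
    hence "s mod d = s' mod d" by (rule mod_cancel_nat)
    hence "s = s'" using k by simp
    thus "x = y" using xx yy kk by simp
  qed
  have img: "mkG d n \<sigma> c ` cdom d n = cdom d n"
  proof
    show "mkG d n \<sigma> c ` cdom d n \<subseteq> cdom d n"
    proof
      fix y assume "y \<in> mkG d n \<sigma> c ` cdom d n"
      then obtain k s where ks: "(k, s) \<in> cdom d n" "y = mkG d n \<sigma> c (k, s)" by auto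
      hence k: "k \<in> {1..n}" "s < d" by (auto simp: cdom_def)
      have "\<sigma> k \<in> {1..n}" by (metis k(1) assms(2) permutes_in_image)
      thus "y \<in> cdom d n" using ks(2) k assms(1) by (simp add: mkG_in cdom_def)
    qed
    show "cdom d n \<subseteq> mkG d n \<sigma> c ` cdom d n"
    proof
      fix y assume y: "y \<in> cdom d n"
      obtain k' s' where yy: "y = (k', s')" by (cases y)
      have k: "k' \<in> {1..n}" "s' < d" using y yy by (auto simp: cdom_def)
      define k where "k = inv_into UNIV \<sigma> k'"
      have kin: "k \<in> {1..n}" "\<sigma> k = k'" unfolding k_def
        by (metis k(1) assms(2) permutes_inv permutes_in_image) (metis assms(2) permutes_inverses(1))
      define s where "s = (s' + (d - c k mod d)) mod d"
      have dd: "d - c k mod d + c k mod d = d" using assms(1) by (simp add: less_imp_le)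
      have "(s + c k) mod d = (s' + (d - c k mod d) + c k mod d) mod d"
        unfolding s_def by (simp add: mod_add_left_eq mod_add_right_eq)
      also have "\<dots> = (s' + d) mod d" using dd by (simp add: add.assoc)
      also have "\<dots> = s'" using k by simp
      moreover have "s < d" using assms(1) by (simp add: s_def)
      ultimately have "mkG d n \<sigma> c (k, s) = y" using kin by (simp add: mkG_in yy)
      moreover have "(k, s) \<in> cdom d n" using kin assms(1) by (simp add: cdom_def s_def)
      ultimately show "y \<in> mkG d n \<sigma> c ` cdom d n" by force
    qed
  qed
  show ?thesis using inj img by (simp add: bij_betw_def)
qed

lemma G_bij: assumes "d > 0" "g \<in> Gddn d n" shows "bij_betw g (cdom d n) (cdom d n)"
proof -
  obtain \<sigma> c where "\<sigma> permutes {1..n}" "(\<Sum>k\<in>{1..n}. c k) mod d = 0" "g = mkG d n \<sigma> c"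
    by (rule G_mkG[OF assms(2)])
  thus ?thesis using bij_mkG[OF assms(1)] by simp
qed

lemma G_out: assumes "g \<in> Gddn d n" "x \<notin> cdom d n" shows "g x = x"
proof -
  have h: "\<forall>x. x \<notin> cdom d n \<longrightarrow> g x = x" using assms(1) unfolding Gddn_def mem_Collect_eq by (rule conjunct1)
  show ?thesis using h assms(2) by blast
qed

lemma ginv_left: assumes "d > 0" "g \<in> Gddn d n" shows "ginv d n g \<circ> g = id"
proof
  fix x
  have b: "bij_betw g (cdom d n) (cdom d n)" by (rule G_bij[OF assms])
  show "(ginv d n g \<circ> g) x = id x"
  proof (cases "x \<in> cdom d n")
    case True
    hence "g x \<in> cdom d n" by (rule bij_betw_apply[OF b])
    thus ?thesis using True b by (simp add: ginv_def bij_betw_inv_into_left)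
  next
    case False
    hence "g x = x" by (rule G_out[OF assms(2)])
    thus ?thesis using False by (simp add: ginv_def)
  qed
qed

lemma ginv_right: assumes "d > 0" "g \<in> Gddn d n" shows "g \<circ> ginv d n g = id"
proof
  fix x
  have b: "bij_betw g (cdom d n) (cdom d n)" by (rule G_bij[OF assms])
  show "(g \<circ> ginv d n g) x = id x"
  proof (cases "x \<in> cdom d n")
    case True
    thus ?thesis using b by (simp add: ginv_def bij_betw_inv_into_right)
  next
    case False
    hence "g x = x" by (rule G_out[OF assms(2)])
    thus ?thesis using False by (simp add: ginv_def)
  qed
qed



lemma zeta_pow_dminus: "d > 0 \<Longrightarrow> t \<le> d \<Longrightarrow> zeta d ^ t * zeta d ^ (d - t) = 1"
  by (simp add: power_add[symmetric] zeta_pow_d)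

lemma gmat_mkG:
  assumes "d > 0" "j \<in> {1..n}"
  shows "gmat d (mkG d n \<sigma> c) i j = (if \<sigma> j = i then zeta d ^ c j else 0)"
  using assms by (simp add: gmat_def mkG_in zeta_pow_mod)

lemma id_mkG: "mkG d n (\<lambda>k. k) (\<lambda>k. 0) = id"
  by (rule mkG_id) simp

lemma id_G: "id \<in> Gddn d n"
proof -
  have "mkG d n (\<lambda>k. k) (\<lambda>k. 0) \<in> Gddn d n"
    by (rule mkG_in_G) (simp_all add: permutes_id[unfolded id_def])
  thus ?thesis by (simp add: id_mkG)
qed

definition tr :: "nat \<Rightarrow> nat \<Rightarrow> nat \<Rightarrow> nat \<Rightarrow> nat \<Rightarrow> (nat \<times> nat \<Rightarrow> nat \<times> nat)" where
  "tr d n a b t = mkG d n (transpose a b) (\<lambda>k. if k = a then t else if k = b then d - t else 0)"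

lemma tr_G:
  assumes "a \<in> {1..n}" "b \<in> {1..n}" "a \<noteq> b" "t \<le> d"
  shows "tr d n a b t \<in> Gddn d n"
  unfolding tr_def
proof (rule mkG_in_G)
  show "transpose a b permutes {1..n}" by (rule permutes_swap_id[OF assms(1,2)])
  have "(\<lambda>k. if k = a then t else if k = b then d - t else 0) =
        (\<lambda>k. (if k = a then t else 0) + (if k = b then d - t else 0))"
    using assms(3) by auto
  hence "(\<Sum>k\<in>{1..n}. if k = a then t else if k = b then d - t else 0) = t + (d - t)"
    using assms(1,2) by (simp only: sum.distrib) simp
  thus "(\<Sum>k\<in>{1..n}. if k = a then t else if k = b then d - t else 0) mod d = 0"
    using assms(4) by simp
qed

lemma tr_refl:
  assumes "d > 0" "a \<in> {1..n}" "b \<in> {1..n}" "a \<noteq> b" "t \<le> d"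
  shows "tr d n a b t \<in> reflections d n"
  unfolding reflections_def mem_Collect_eq
proof (intro conjI)
  show "tr d n a b t \<in> Gddn d n" by (rule tr_G[OF assms(2-5)])
  define v where "v = (\<lambda>i. (if i = b then zeta d ^ t else 0) - (if i = a then 1 else 0 :: complex))"
  define w where "w = (\<lambda>j. (if j = a then 1 else 0) - (if j = b then zeta d ^ (d - t) else 0 :: complex))"
  have zz: "zeta d ^ t * zeta d ^ (d - t) = 1" by (rule zeta_pow_dminus[OF assms(1,5)])
  have "(\<exists>i\<in>{1..n}. v i \<noteq> 0) \<and> (\<exists>j\<in>{1..n}. w j \<noteq> 0) \<and>
      (\<forall>i\<in>{1..n}. \<forall>j\<in>{1..n}. gmat d (tr d n a b t) i j - (if i = j then 1 else 0) = v i * w j)"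
  proof (intro conjI ballI)
    show "\<exists>i\<in>{1..n}. v i \<noteq> 0" using assms(2,4) by (intro bexI[of _ a]) (auto simp: v_def)
    show "\<exists>j\<in>{1..n}. w j \<noteq> 0" using assms(2,4) by (intro bexI[of _ a]) (auto simp: w_def)
    fix i j assume i: "i \<in> {1..n}" and j: "j \<in> {1..n}"
    have g: "gmat d (tr d n a b t) i j = (if transpose a b j = i then zeta d ^ (if j = a then t else if j = b then d - t else 0) else 0)"
      unfolding tr_def by (rule gmat_mkG[OF assms(1) j])
    show "gmat d (tr d n a b t) i j - (if i = j then 1 else 0) = v i * w j"
      unfolding g v_def w_def using assms(4) zz
      by (cases "j = a"; cases "j = b"; cases "i = a"; cases "i = b") (auto simp: transpose_def)
  qed
  thus "\<exists>v w. (\<exists>i\<in>{1..n}. v i \<noteq> 0) \<and> (\<exists>j\<in>{1..n}. w j \<noteq> 0) \<and>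
      (\<forall>i\<in>{1..n}. \<forall>j\<in>{1..n}. gmat d (tr d n a b t) i j - (if i = j then 1 else 0) = v i * w j)"
    by blast
qed

section \<open>Action on vectors\<close>

definition act :: "nat \<Rightarrow> nat \<Rightarrow> (nat \<times> nat \<Rightarrow> nat \<times> nat) \<Rightarrow> (nat \<Rightarrow> complex) \<Rightarrow> nat \<Rightarrow> complex" where
  "act d n g x = (\<lambda>i. \<Sum>j\<in>{1..n}. gmat d g i j * x j)"

lemma act_mkG:
  assumes "d > 0" "\<sigma> permutes {1..n}" "i \<in> {1..n}"
  shows "act d n (mkG d n \<sigma> c) x i = zeta d ^ c (inv_into UNIV \<sigma> i) * x (inv_into UNIV \<sigma> i)"
proof -
  let ?j = "inv_into UNIV \<sigma> i"
  have jin: "?j \<in> {1..n}" by (metis assms(2,3) permutes_inv permutes_in_image)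
  have eq: "\<And>j. \<sigma> j = i \<longleftrightarrow> j = ?j" by (metis assms(2) permutes_inverses(1) permutes_inverses(2))
  have "act d n (mkG d n \<sigma> c) x i = (\<Sum>j\<in>{1..n}. (if j = ?j then zeta d ^ c j * x j else 0))"
    unfolding act_def by (rule sum.cong) (auto simp: gmat_mkG[OF assms(1)] eq)
  also have "\<dots> = zeta d ^ c ?j * x ?j" using jin by simp
  finally show ?thesis .
qed

lemma act_cong: "(\<And>j. j \<in> {1..n} \<Longrightarrow> x j = y j) \<Longrightarrow> act d n g x i = act d n g y i"
  unfolding act_def by (rule sum.cong) auto

lemma act_id: assumes "d > 0" "i \<in> {1..n}" shows "act d n id x i = x i"
proof -
  have p: "(\<lambda>k. k) permutes {1..n}" using permutes_id[unfolded id_def] .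
  have "inv_into UNIV (\<lambda>k::nat. k) i = i" using inv_id[unfolded id_def] by metis
  thus ?thesis using act_mkG[OF assms(1) p assms(2), of "\<lambda>k. 0" x] by (simp add: id_mkG)
qed

lemma act_comp:
  assumes "d > 0" "g \<in> Gddn d n" "h \<in> Gddn d n" "i \<in> {1..n}"
  shows "act d n (g \<circ> h) x i = act d n g (act d n h x) i"
proof -
  obtain \<sigma>1 c1 where 1: "\<sigma>1 permutes {1..n}" "(\<Sum>k\<in>{1..n}. c1 k) mod d = 0" "g = mkG d n \<sigma>1 c1"
    by (rule G_mkG[OF assms(2)])
  obtain \<sigma>2 c2 where 2: "\<sigma>2 permutes {1..n}" "(\<Sum>k\<in>{1..n}. c2 k) mod d = 0" "h = mkG d n \<sigma>2 c2"
    by (rule G_mkG[OF assms(3)])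
  have m: "\<forall>k\<in>{1..n}. \<sigma>2 k \<in> {1..n}" by (metis 2(1) permutes_in_image)
  have p: "\<sigma>1 \<circ> \<sigma>2 permutes {1..n}" by (rule permutes_compose[OF 2(1) 1(1)])
  define k where "k = inv_into UNIV \<sigma>1 i"
  define j where "j = inv_into UNIV \<sigma>2 k"
  have kin: "k \<in> {1..n}" unfolding k_def by (metis assms(4) 1(1) permutes_inv permutes_in_image)
  have sj: "\<sigma>2 j = k" unfolding j_def by (metis 2(1) permutes_inverses(1))
  have inv: "inv_into UNIV (\<sigma>1 \<circ> \<sigma>2) i = j"
    unfolding j_def k_def
    by (metis 1(1) 2(1) o_inv_distrib permutes_bij comp_apply)
  have "act d n (g \<circ> h) x i = zeta d ^ (c2 j + c1 (\<sigma>2 j)) * x j"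
    unfolding 1(3) 2(3) mkG_comp[OF assms(1) m] act_mkG[OF assms(1) p assms(4)] inv by simp
  also have "\<dots> = zeta d ^ c1 k * (zeta d ^ c2 j * x j)" by (simp add: sj power_add)
  also have "\<dots> = act d n g (act d n h x) i"
    unfolding 1(3) 2(3) act_mkG[OF assms(1) 1(1) assms(4)] k_def[symmetric]
      act_mkG[OF assms(1) 2(1) kin] j_def[symmetric] by simp
  finally show ?thesis .
qed

lemma act_add: "act d n g (\<lambda>j. x j + y j) i = act d n g x i + act d n g y i"
  unfolding act_def by (simp add: distrib_left sum.distrib)

lemma act_diff: "act d n g (\<lambda>j. x j - y j) i = act d n g x i - act d n g y i"
  unfolding act_def by (simp add: right_diff_distrib sum_subtractf)

section \<open>Reflections as rank one perturbations\<close>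

definition rvw :: "nat \<Rightarrow> nat \<Rightarrow> (nat \<times> nat \<Rightarrow> nat \<times> nat) \<Rightarrow> (nat \<Rightarrow> complex) \<times> (nat \<Rightarrow> complex)" where
  "rvw d n t = (SOME p. (\<exists>i\<in>{1..n}. fst p i \<noteq> 0) \<and> (\<exists>j\<in>{1..n}. snd p j \<noteq> 0) \<and>
      (\<forall>i\<in>{1..n}. \<forall>j\<in>{1..n}. gmat d t i j - (if i = j then 1 else 0) = fst p i * snd p j))"

definition bt :: "nat \<Rightarrow> nat \<Rightarrow> (nat \<times> nat \<Rightarrow> nat \<times> nat) \<Rightarrow> (nat \<Rightarrow> complex) \<Rightarrow> complex" where
  "bt d n t x = (\<Sum>j\<in>{1..n}. snd (rvw d n t) j * x j)"

lemma rvw_prop: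
  assumes "t \<in> reflections d n"
  shows "\<forall>i\<in>{1..n}. \<forall>j\<in>{1..n}. gmat d t i j - (if i = j then 1 else 0) = fst (rvw d n t) i * snd (rvw d n t) j"
proof -
  from assms obtain v w where "(\<exists>i\<in>{1..n}. v i \<noteq> 0) \<and> (\<exists>j\<in>{1..n}. w j \<noteq> 0) \<and>
      (\<forall>i\<in>{1..n}. \<forall>j\<in>{1..n}. gmat d t i j - (if i = j then 1 else 0) = v i * w j)"
    unfolding reflections_def by blast
  hence "\<exists>p. (\<exists>i\<in>{1..n}. fst p i \<noteq> 0) \<and> (\<exists>j\<in>{1..n}. snd p j \<noteq> 0) \<and>
      (\<forall>i\<in>{1..n}. \<forall>j\<in>{1..n}. gmat d t i j - (if i = j then 1 else 0) = fst p i * snd p j)"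
    by (intro exI[of _ "(v, w)"]) simp
  from someI_ex[OF this] show ?thesis unfolding rvw_def by blast
qed

lemma refl_act:
  assumes "t \<in> reflections d n" "i \<in> {1..n}"
  shows "act d n t x i = x i + fst (rvw d n t) i * bt d n t x"
proof -
  have "act d n t x i = (\<Sum>j\<in>{1..n}. (if i = j then x j else 0) + fst (rvw d n t) i * (snd (rvw d n t) j * x j))"
    unfolding act_def
  proof (rule sum.cong)
    fix j assume j: "j \<in> {1..n}"
    have "gmat d t i j = (if i = j then 1 else 0) + fst (rvw d n t) i * snd (rvw d n t) j"
      using rvw_prop[OF assms(1)] assms(2) j by (metis diff_add_cancel add.commute)
    thus "gmat d t i j * x j = (if i = j then x j else 0) + fst (rvw d n t) i * (snd (rvw d n t) j * x j)"
      by (simp add: algebra_simps)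
  qed simp
  also have "\<dots> = (\<Sum>j\<in>{1..n}. (if i = j then x j else 0)) + fst (rvw d n t) i * bt d n t x"
    unfolding bt_def by (simp only: sum.distrib sum_distrib_left)
  also have "(\<Sum>j\<in>{1..n}. (if i = j then x j else 0)) = x i" using assms(2) by simp
  finally show ?thesis .
qed

lemma refl_G: "t \<in> reflections d n \<Longrightarrow> t \<in> Gddn d n"
  unfolding reflections_def by simp

lemma foldr_G: "d > 0 \<Longrightarrow> set ts \<subseteq> Gddn d n \<Longrightarrow> foldr (\<circ>) ts id \<in> Gddn d n"
  by (induction ts) (auto simp: id_G Gddn_comp)

lemma foldr_refl_G: "d > 0 \<Longrightarrow> set ts \<subseteq> reflections d n \<Longrightarrow> foldr (\<circ>) ts id \<in> Gddn d n"
  using foldr_G[of d ts n] refl_G by blast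

lemma fix_lemma:
  assumes "d > 0" "set ts \<subseteq> reflections d n" "\<forall>t\<in>set ts. bt d n t x = 0" "i \<in> {1..n}"
  shows "act d n (foldr (\<circ>) ts id) x i = x i"
  using assms(2-4)
proof (induction ts arbitrary: i)
  case Nil thus ?case using act_id[OF assms(1) Nil.prems(3)] by (simp add: id_def)
next
  case (Cons t ts)
  have t: "t \<in> reflections d n" using Cons.prems by simp
  have P: "foldr (\<circ>) ts id \<in> Gddn d n" using foldr_refl_G[OF assms(1)] Cons.prems by simp
  have IH: "act d n (foldr (\<circ>) ts id) x j = x j" if j: "j \<in> {1..n}" for j
    by (rule Cons.IH[OF _ _ j]) (use Cons.prems in auto)
  have "bt d n t (act d n (foldr (\<circ>) ts id) x) = bt d n t x"
    unfolding bt_def by (rule sum.cong) (auto simp: IH)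
  hence b: "bt d n t (act d n (foldr (\<circ>) ts id) x) = 0" using Cons.prems by simp
  have "act d n (foldr (\<circ>) (t # ts) id) x i = act d n t (act d n (foldr (\<circ>) ts id) x) i"
    using act_comp[OF assms(1) refl_G[OF t] P Cons.prems(3)] by simp
  also have "\<dots> = x i" using refl_act[OF t Cons.prems(3)] b IH[OF Cons.prems(3)] by simp
  finally show ?case .
qed

section \<open>Absolute length basics\<close>

lemma foldr_comp_id: "foldr (\<circ>) xs g = foldr (\<circ>) xs id \<circ> g"
  by (induction xs) (auto simp: comp_assoc)

lemma foldr_append_id: "foldr (\<circ>) (xs @ ys) id = foldr (\<circ>) xs id \<circ> foldr (\<circ>) ys id"
  by (simp only: foldr_append) (rule foldr_comp_id)

lemma abs_len_le:
  assumes "set ts \<subseteq> reflections d n" "foldr (\<circ>) ts id = u"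
  shows "abs_len d n u \<le> length ts"
  unfolding abs_len_def by (rule Least_le) (use assms in blast)

lemma abs_len_ex:
  assumes "set ts \<subseteq> reflections d n" "foldr (\<circ>) ts id = u"
  obtains us where "length us = abs_len d n u" "set us \<subseteq> reflections d n" "foldr (\<circ>) us id = u"
proof -
  have "\<exists>k. \<exists>ts. length ts = k \<and> set ts \<subseteq> reflections d n \<and> foldr (\<circ>) ts id = u"
    using assms by blast
  from LeastI_ex[OF this] show ?thesis using that unfolding abs_len_def by blast
qed

lemma abs_len_triangle:
  assumes "set ts \<subseteq> reflections d n" "foldr (\<circ>) ts id = u"
    and "set ss \<subseteq> reflections d n" "foldr (\<circ>) ss id = v"
  shows "abs_len d n (u \<circ> v) \<le> abs_len d n u + abs_len d n v"
proof -
  obtain us where us: "length us = abs_len d n u" "set us \<subseteq> reflections d n" "foldr (\<circ>) us id = u"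
    using abs_len_ex[OF assms(1,2)] by blast
  obtain vs where vs: "length vs = abs_len d n v" "set vs \<subseteq> reflections d n" "foldr (\<circ>) vs id = v"
    using abs_len_ex[OF assms(3,4)] by blast
  have "abs_len d n (u \<circ> v) \<le> length (us @ vs)"
    by (rule abs_len_le) (use us vs in \<open>auto simp del: foldr_append simp add: foldr_append_id\<close>)
  thus ?thesis using us vs by simp
qed



definition Bm :: "nat \<Rightarrow> nat \<Rightarrow> (nat \<times> nat \<Rightarrow> nat \<times> nat) list \<Rightarrow> complex mat" where
  "Bm d n ts = mat n n (\<lambda>(p, q). if p < length ts then snd (rvw d n (ts ! p)) (Suc q) else 0)"

definition toF :: "nat \<Rightarrow> complex vec \<Rightarrow> nat \<Rightarrow> complex" where
  "toF n v = (\<lambda>k. if k \<in> {1..n} then v $ (k - 1) else 0)"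

lemma bt_toF: "bt d n t (toF n v) = (\<Sum>q<n. snd (rvw d n t) (Suc q) * v $ q)"
proof -
  have "bt d n t (toF n v) = (\<Sum>k\<in>{Suc 0..n}. snd (rvw d n t) k * toF n v k)"
    unfolding bt_def by simp
  also have "\<dots> = (\<Sum>q<n. snd (rvw d n t) (Suc q) * toF n v (Suc q))"
    by (rule sum.atLeast1_atMost_eq)
  also have "\<dots> = (\<Sum>q<n. snd (rvw d n t) (Suc q) * v $ q)"
    by (rule sum.cong) (auto simp: toF_def)
  finally show ?thesis .
qed

lemma Bm_carrier: "Bm d n ts \<in> carrier_mat n n"
  unfolding Bm_def by simp

lemma Bm_mult:
  assumes "p < n" "dim_vec v = n"
  shows "(Bm d n ts *\<^sub>v v) $ p = (if p < length ts then bt d n (ts ! p) (toF n v) else 0)"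
proof -
  have "(Bm d n ts *\<^sub>v v) $ p = (\<Sum>q\<in>{0..<n}. (if p < length ts then snd (rvw d n (ts ! p)) (Suc q) else 0) * v $ q)"
    using assms unfolding Bm_def by (simp add: scalar_prod_def)
  also have "\<dots> = (if p < length ts then bt d n (ts ! p) (toF n v) else 0)"
    by (simp add: bt_toF atLeast0LessThan)
  finally show ?thesis .
qed

lemma solve_lemma:
  assumes d: "d > 0" and ts: "set ts \<subseteq> reflections d n" and len: "length ts \<le> n"
    and nk: "\<And>x. \<forall>t\<in>set ts. bt d n t x = 0 \<Longrightarrow> \<forall>k\<in>{1..n}. x k = 0"
  shows "length ts = n \<and> (\<forall>r. \<exists>z. \<forall>j<length ts. bt d n (ts ! j) z = r j)"
proof -
  let ?B = "Bm d n ts"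
  have detnz: "det ?B \<noteq> 0"
  proof
    assume "det ?B = 0"
    then obtain v where v: "v \<in> carrier_vec n" "v \<noteq> 0\<^sub>v n" "?B *\<^sub>v v = 0\<^sub>v n"
      using det_0_iff_vec_prod_zero[OF Bm_carrier] by blast
    have dv: "dim_vec v = n" using v(1) by simp
    have "\<forall>t\<in>set ts. bt d n t (toF n v) = 0"
    proof
      fix t assume "t \<in> set ts"
      then obtain p where p: "p < length ts" "t = ts ! p" by (auto simp: in_set_conv_nth)
      have "(?B *\<^sub>v v) $ p = 0" using v(3) p len by simp
      thus "bt d n t (toF n v) = 0" using Bm_mult[of p n v d ts] p len dv by simp
    qed
    hence z: "\<forall>k\<in>{1..n}. toF n v k = 0" by (rule nk)
    have "v = 0\<^sub>v n"
    proof (rule eq_vecI)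
      fix q assume "q < dim_vec (0\<^sub>v n)"
      hence q: "q < n" by simp
      hence "toF n v (Suc q) = 0" using z by simp
      thus "v $ q = 0\<^sub>v n $ q" using q by (simp add: toF_def)
    qed (simp add: dv)
    thus False using v(2) by simp
  qed
  have "?B \<in> Units (ring_mat TYPE(complex) n ())"
    by (rule det_non_zero_imp_unit[OF Bm_carrier detnz])
  then obtain C where C: "C \<in> carrier_mat n n" "?B * C = 1\<^sub>m n"
    unfolding Units_def ring_mat_def by auto
  have part2: "\<forall>r. \<exists>z. \<forall>j<length ts. bt d n (ts ! j) z = r j"
  proof
    fix r :: "nat \<Rightarrow> complex"
    let ?r = "vec n r"
    let ?z = "C *\<^sub>v ?r"
    have dz: "dim_vec ?z = n" using C(1) by simp
    have a: "(?B * C) *\<^sub>v ?r = ?B *\<^sub>v (C *\<^sub>v ?r)"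
      by (rule assoc_mult_mat_vec[OF Bm_carrier C(1)]) simp
    have e: "?B *\<^sub>v ?z = ?r"
      using a C(2) by simp
    show "\<exists>z. \<forall>j<length ts. bt d n (ts ! j) z = r j"
    proof (intro exI allI impI)
      fix j assume j: "j < length ts"
      have jn: "j < n" using j len by simp
      have "(?B *\<^sub>v ?z) $ j = r j" using e jn by simp
      thus "bt d n (ts ! j) (toF n ?z) = r j" using Bm_mult[OF jn dz] j by simp
    qed
  qed
  have part1: "length ts = n"
  proof (rule ccontr)
    assume "length ts \<noteq> n"
    hence lt: "length ts < n" using len by simp
    hence n1: "n - 1 < n" "\<not> (n - 1 < length ts)" by auto
    have "(?B * C) $$ (n - 1, n - 1) = row ?B (n - 1) \<bullet> col C (n - 1)"
      using n1 C(1) by (simp add: Bm_def)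
    also have "row ?B (n - 1) = 0\<^sub>v n"
      using n1 unfolding Bm_def by (intro eq_vecI) auto
    also have "0\<^sub>v n \<bullet> col C (n - 1) = 0"
      using C(1) by (simp add: scalar_prod_def)
    finally have "(?B * C) $$ (n - 1, n - 1) = 0" .
    moreover have "(?B * C) $$ (n - 1, n - 1) = 1" using C(2) n1 by simp
    ultimately show False by simp
  qed
  show ?thesis using part1 part2 by blast
qed



definition sg :: "nat \<Rightarrow> nat \<Rightarrow> nat" where
  "sg n k = (if k + 2 \<le> n then Suc k else if k = n - 1 then 1 else k)"

definition cg :: "nat \<Rightarrow> nat \<Rightarrow> nat \<Rightarrow> nat" where
  "cg d n k = (if k = n - 1 then 1 else if k = n then d - 1 else 0)"

definition gam :: "nat \<Rightarrow> nat \<Rightarrow> (nat \<times> nat \<Rightarrow> nat \<times> nat)" where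
  "gam d n = mkG d n (sg n) (cg d n)"

lemma bcycle_at:
  assumes "c < d" "j < length ks" "fst (ks ! j) = k" "\<forall>j'<j. fst (ks ! j') \<noteq> k"
  shows "bcycle d s ks (k, c) = (if Suc j < length ks then
      (fst (ks ! Suc j), nat ((int c - int (snd (ks ! j)) + int (snd (ks ! Suc j))) mod int d))
    else (fst (ks ! 0), nat ((int c - int (snd (ks ! j)) + int (snd (ks ! 0)) + int s) mod int d)))"
proof -
  have ex: "\<exists>j<length ks. fst (ks ! j) = k" using assms by blast
  have L: "(LEAST j. j < length ks \<and> fst (ks ! j) = k) = j"
    by (rule Least_equality) (use assms in \<open>auto simp: not_less[symmetric]\<close>)
  show ?thesis unfolding bcycle_def using assms(1) ex by (simp only: case_prod_conv L Let_def if_True simp_thms)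
qed

lemma bcycle_out:
  assumes "\<not> (c < d \<and> (\<exists>j<length ks. fst (ks ! j) = k))"
  shows "bcycle d s ks (k, c) = (k, c)"
proof -
  have F: "(c < d \<and> (\<exists>j<length ks. fst (ks ! j) = k)) = False" using assms by simp
  show ?thesis unfolding bcycle_def case_prod_conv F if_False ..
qed

lemma nat_mod_helper: "nat (int a mod int d) = a mod d"
  by (metis nat_int zmod_int)

lemma bc1_in:
  assumes "c < d" "1 \<le> k" "k \<le> n - 1"
  shows "bcycle d 1 (map (\<lambda>k. (k, 0)) [1..<n]) (k, c) =
    (if k < n - 1 then (Suc k, c) else (1, (c + 1) mod d))"
proof -
  let ?ks = "map (\<lambda>k. (k, 0::nat)) [1..<n]"
  have len: "length ?ks = n - 1" by simp
  have nth: "\<And>j. j < n - 1 \<Longrightarrow> ?ks ! j = (Suc j, 0)" by simp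
  have A: "bcycle d 1 ?ks (k, c) = (if Suc (k - 1) < length ?ks then
      (fst (?ks ! Suc (k - 1)), nat ((int c - int (snd (?ks ! (k - 1))) + int (snd (?ks ! Suc (k - 1)))) mod int d))
    else (fst (?ks ! 0), nat ((int c - int (snd (?ks ! (k - 1))) + int (snd (?ks ! 0)) + int 1) mod int d)))"
  proof (rule bcycle_at)
    show "\<forall>j'<k - 1. fst (?ks ! j') \<noteq> k"
    proof (intro allI impI)
      fix j' assume j': "j' < k - 1"
      hence "j' < n - 1" using assms by simp
      hence "?ks ! j' = (Suc j', 0)" by (rule nth)
      thus "fst (?ks ! j') \<noteq> k" using j' by simp
    qed
  qed (use assms in \<open>auto simp: nth\<close>)
  show ?thesis
  proof (cases "k < n - 1")
    case True
    have "nat ((int c - int 0 + int 0) mod int d) = c" using assms(1) nat_mod_helper[of c d] by simp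
    thus ?thesis unfolding A using True assms by (simp add: nth)
  next
    case False
    have h1: "nat ((1 + int c) mod int d) = (c + 1) mod d"
      using nat_mod_helper[of "c + 1" d] by simp
    have h2: "nat ((int c + 1) mod int d) = (c + 1) mod d"
      using h1 by (simp add: add.commute)
    have n1: "0 < n - 1" using assms by simp
    have sk: "Suc (k - 1) = k" using assms by simp
    have "\<not> Suc (k - 1) < length ?ks" using False sk by simp
    hence "bcycle d 1 ?ks (k, c) = (fst (?ks ! 0), nat ((int c - int (snd (?ks ! (k - 1))) + int (snd (?ks ! 0)) + int 1) mod int d))"
      unfolding A by simp
    also have "\<dots> = (1, (c + 1) mod d)" using h1 h2 assms nth[OF n1] by (simp add: nth)
    finally show ?thesis using False by simp
  qed
qed

lemma bc1_out:
  assumes "\<not> (c < d \<and> 1 \<le> k \<and> k \<le> n - 1)"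
  shows "bcycle d 1 (map (\<lambda>k. (k, 0)) [1..<n]) (k, c) = (k, c)"
  by (rule bcycle_out) (use assms in auto)

lemma bc2_in:
  assumes "c < d"
  shows "bcycle d (d - 1) [(n, 0)] (n, c) = (n, (c + (d - 1)) mod d)"
proof -
  have A: "bcycle d (d - 1) [(n, 0)] (n, c) = (if Suc 0 < length [(n, 0::nat)] then
      (fst ([(n, 0::nat)] ! Suc 0), nat ((int c - int (snd ([(n, 0::nat)] ! 0)) + int (snd ([(n, 0::nat)] ! Suc 0))) mod int d))
    else (fst ([(n, 0::nat)] ! 0), nat ((int c - int (snd ([(n, 0::nat)] ! 0)) + int (snd ([(n, 0::nat)] ! 0)) + int (d - 1)) mod int d)))"
    by (rule bcycle_at) (use assms in auto)
  have "nat ((int c - int 0 + int 0 + int (d - 1)) mod int d) = (c + (d - 1)) mod d"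
    using nat_mod_helper[of "c + (d - 1)" d] by simp
  thus ?thesis unfolding A by simp
qed

lemma bc2_out:
  assumes "\<not> (c < d \<and> k = n)"
  shows "bcycle d (d - 1) [(n, 0)] (k, c) = (k, c)"
  by (rule bcycle_out) (use assms in auto)

lemma gamma_eq:
  assumes "d \<ge> 2" "n \<ge> 2"
  shows "gamma d n = gam d n"
proof
  fix x :: "nat \<times> nat"
  obtain k c where x: "x = (k, c)" by (cases x)
  show "gamma d n x = gam d n x"
  proof (cases "c < d \<and> k \<in> {1..n}")
    case True
    show ?thesis
    proof (cases "k = n")
      case True2: True
      have b2: "bcycle d (d - 1) [(n, 0)] (n, c) = (n, (c + (d - 1)) mod d)"
        by (rule bc2_in) (use True in simp)
      have b1: "bcycle d 1 (map (\<lambda>k. (k, 0)) [1..<n]) (n, (c + (d - 1)) mod d) = (n, (c + (d - 1)) mod d)"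
        by (rule bc1_out) (use assms in simp)
      have "gamma d n x = (n, (c + (d - 1)) mod d)"
        unfolding gamma_def x True2 comp_def b2 b1 ..
      thus ?thesis using True True2 assms unfolding gam_def x
        by (simp add: mkG_in sg_def cg_def)
    next
      case False
      have b2: "bcycle d (d - 1) [(n, 0)] (k, c) = (k, c)"
        by (rule bc2_out) (use False in simp)
      have b1: "bcycle d 1 (map (\<lambda>k. (k, 0)) [1..<n]) (k, c) = (if k < n - 1 then (Suc k, c) else (1, (c + 1) mod d))"
        by (rule bc1_in) (use True False in auto)
      have "gamma d n x = (if k < n - 1 then (Suc k, c) else (1, (c + 1) mod d))"
        unfolding gamma_def x comp_def b2 b1 ..
      thus ?thesis using True False assms unfolding gam_def x
        by (auto simp: mkG_in sg_def cg_def)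
    qed
  next
    case False
    have b2: "bcycle d (d - 1) [(n, 0)] (k, c) = (k, c)"
      by (rule bc2_out) (use False assms in auto)
    have b1: "bcycle d 1 (map (\<lambda>k. (k, 0)) [1..<n]) (k, c) = (k, c)"
      by (rule bc1_out) (use False assms in auto)
    have "gamma d n x = x"
      unfolding gamma_def x comp_def b2 b1 ..
    thus ?thesis using False unfolding gam_def x by (auto simp: mkG_out)
  qed
qed



definition cyc :: "nat \<Rightarrow> nat \<Rightarrow> nat \<Rightarrow> nat" where
  "cyc a m k = (if a \<le> k \<and> k < m then Suc k else if k = m then a else k)"

definition chainL :: "nat \<Rightarrow> nat \<Rightarrow> nat \<Rightarrow> nat \<Rightarrow> (nat \<times> nat \<Rightarrow> nat \<times> nat) list" where
  "chainL d n a m = map (\<lambda>j. tr d n j (Suc j) 0) [a..<m]"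

definition Dcol :: "nat \<Rightarrow> nat \<Rightarrow> nat \<Rightarrow> nat \<Rightarrow> nat" where
  "Dcol d n a k = (if k = a then 1 else if k = n then d - 1 else 0)"

lemma cyc_maps: "1 \<le> a \<Longrightarrow> a \<le> m \<Longrightarrow> m \<le> n \<Longrightarrow> \<forall>k\<in>{1..n}. cyc a m k \<in> {1..n}"
  by (auto simp: cyc_def)

lemma transpose_maps: "a \<in> {1..n} \<Longrightarrow> b \<in> {1..n} \<Longrightarrow> \<forall>k\<in>{1..n}. transpose a b k \<in> {1..n}"
  by (auto simp: transpose_def)

lemma chain_refl:
  assumes "d > 0" "1 \<le> a" "m \<le> n"
  shows "set (chainL d n a m) \<subseteq> reflections d n"
  unfolding chainL_def using assms by (auto intro!: tr_refl)

lemma chain_len: "length (chainL d n a m) = m - a"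
  by (simp add: chainL_def)

lemma chain_eq_aux:
  assumes "d > 0" "1 \<le> a"
  shows "a + k \<le> n \<Longrightarrow> foldr (\<circ>) (chainL d n a (a + k)) id = mkG d n (cyc a (a + k)) (\<lambda>k. 0)"
proof (induction k)
  case 0
  have "mkG d n (cyc a a) (\<lambda>k. 0) = id" by (rule mkG_id) (simp add: cyc_def)
  thus ?case by (simp add: chainL_def)
next
  case (Suc k)
  let ?m = "a + k"
  have sm: "Suc ?m \<le> n" using Suc.prems by simp
  have IH: "foldr (\<circ>) (chainL d n a ?m) id = mkG d n (cyc a ?m) (\<lambda>k. 0)"
    by (rule Suc.IH) (use sm in simp)
  have "chainL d n a (a + Suc k) = chainL d n a ?m @ [tr d n ?m (Suc ?m) 0]"
    by (simp add: chainL_def)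
  hence "foldr (\<circ>) (chainL d n a (a + Suc k)) id = foldr (\<circ>) (chainL d n a ?m) id \<circ> tr d n ?m (Suc ?m) 0"
    by (simp only: foldr_append_id) simp
  also have "\<dots> = mkG d n (cyc a ?m) (\<lambda>k. 0) \<circ> tr d n ?m (Suc ?m) 0" by (simp only: IH)
  also have "\<dots> = mkG d n (cyc a ?m \<circ> transpose ?m (Suc ?m))
      (\<lambda>k'. (if k' = ?m then 0 else if k' = Suc ?m then d - 0 else 0) + 0)"
    unfolding tr_def
    by (rule mkG_comp[OF assms(1) transpose_maps]) (use sm assms in auto)
  also have "\<dots> = mkG d n (cyc a (a + Suc k)) (\<lambda>k. 0)"
    by (rule mkG_cong) (auto simp: cyc_def transpose_def)
  finally show ?case .
qed

lemma chain_eq: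
  assumes "d > 0" "1 \<le> a" "a \<le> m" "m \<le> n"
  shows "foldr (\<circ>) (chainL d n a m) id = mkG d n (cyc a m) (\<lambda>k. 0)"
  using chain_eq_aux[OF assms(1,2), of "m - a" n] assms by simp

lemma sucd: "d \<ge> 2 \<Longrightarrow> Suc d mod d = 1"
  by (simp add: mod_Suc)

lemma D_eq:
  assumes "d \<ge> 2" "a \<in> {1..n}" "a \<noteq> n" "x < d"
  shows "tr d n a n x \<circ> tr d n a n ((x + 1) mod d) = mkG d n (\<lambda>k. k) (Dcol d n a)"
proof -
  have n: "n \<in> {1..n}" using assms by auto
  have "tr d n a n x \<circ> tr d n a n ((x + 1) mod d) = mkG d n (transpose a n \<circ> transpose a n)
     (\<lambda>k. (if k = a then (x + 1) mod d else if k = n then d - (x + 1) mod d else 0) +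
          (if transpose a n k = a then x else if transpose a n k = n then d - x else 0))"
    unfolding tr_def by (rule mkG_comp[OF _ transpose_maps]) (use assms n in auto)
  also have "\<dots> = mkG d n (\<lambda>k. k) (Dcol d n a)"
  proof (rule mkG_cong, intro ballI conjI)
    fix k assume k: "k \<in> {1..n}"
    show "(transpose a n \<circ> transpose a n) k = k" by (simp add: transpose_def)
    show "((if k = a then (x + 1) mod d else if k = n then d - (x + 1) mod d else 0) +
          (if transpose a n k = a then x else if transpose a n k = n then d - x else 0)) mod d =
          Dcol d n a k mod d"
    proof (cases "x + 1 < d")
      case True
      thus ?thesis using assms by (auto simp: transpose_def Dcol_def sucd)
    next
      case False
      hence "x + 1 = d" using assms by simp
      thus ?thesis using assms by (auto simp: transpose_def Dcol_def)
    qed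
  qed
  finally show ?thesis .
qed

lemma gam_as_Dcyc:
  assumes "d \<ge> 2" "n \<ge> 2"
  shows "mkG d n (\<lambda>k. k) (Dcol d n 1) \<circ> mkG d n (cyc 1 (n - 1)) (\<lambda>k. 0) = gam d n"
proof -
  have "mkG d n (\<lambda>k. k) (Dcol d n 1) \<circ> mkG d n (cyc 1 (n - 1)) (\<lambda>k. 0) =
     mkG d n ((\<lambda>k. k) \<circ> cyc 1 (n - 1)) (\<lambda>k. 0 + Dcol d n 1 (cyc 1 (n - 1) k))"
    by (rule mkG_comp[OF _ cyc_maps]) (use assms in auto)
  also have "\<dots> = gam d n"
    unfolding gam_def
    by (rule mkG_cong) (use assms in \<open>auto simp: cyc_def sg_def cg_def Dcol_def\<close>)
  finally show ?thesis .
qed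

lemma factor_e:
  assumes "d \<ge> 2" "n \<ge> 2" "s < d"
  shows "foldr (\<circ>) ([tr d n 1 n s, tr d n 1 n ((s + 1) mod d)] @ chainL d n 1 (n - 1)) id = gam d n"
proof -
  have D: "tr d n 1 n s \<circ> tr d n 1 n ((s + 1) mod d) = mkG d n (\<lambda>k. k) (Dcol d n 1)"
    by (rule D_eq) (use assms in auto)
  have C: "foldr (\<circ>) (chainL d n 1 (n - 1)) id = mkG d n (cyc 1 (n - 1)) (\<lambda>k. 0)"
    by (rule chain_eq) (use assms in auto)
  have "foldr (\<circ>) ([tr d n 1 n s, tr d n 1 n ((s + 1) mod d)] @ chainL d n 1 (n - 1)) id =
     (tr d n 1 n s \<circ> tr d n 1 n ((s + 1) mod d)) \<circ> foldr (\<circ>) (chainL d n 1 (n - 1)) id"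
    by (simp only: foldr_append_id) simp
  also have "\<dots> = gam d n" unfolding D C by (rule gam_as_Dcyc[OF assms(1,2)])
  finally show ?thesis .
qed

lemma cyc_in: "a \<le> k \<Longrightarrow> k < m \<Longrightarrow> cyc a m k = Suc k"
  by (simp add: cyc_def)
lemma cyc_last: "cyc a m m = a"
  by (simp add: cyc_def)
lemma cyc_lo: "k < a \<Longrightarrow> a \<le> m \<Longrightarrow> cyc a m k = k"
  by (simp add: cyc_def)
lemma cyc_hi: "m < k \<Longrightarrow> cyc a m k = k"
  by (simp add: cyc_def)

lemma factor_c:
  assumes "d \<ge> 2" "2 \<le> i" "i < n"
  shows "foldr (\<circ>) ([tr d n 1 i 0] @ chainL d n 1 (i - 1) @ [tr d n i n 0, tr d n i n 1] @ chainL d n i (n - 1)) id = gam d n"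
proof -
  have d0: "d > 0" using assms by simp
  have D: "tr d n i n 0 \<circ> tr d n i n 1 = mkG d n (\<lambda>k. k) (Dcol d n i)"
    using D_eq[of d i n 0] assms by simp
  have C1: "foldr (\<circ>) (chainL d n 1 (i - 1)) id = mkG d n (cyc 1 (i - 1)) (\<lambda>k. 0)"
    by (rule chain_eq) (use assms in auto)
  have C2: "foldr (\<circ>) (chainL d n i (n - 1)) id = mkG d n (cyc i (n - 1)) (\<lambda>k. 0)"
    by (rule chain_eq) (use assms in auto)
  have "foldr (\<circ>) ([tr d n 1 i 0] @ chainL d n 1 (i - 1) @ [tr d n i n 0, tr d n i n 1] @ chainL d n i (n - 1)) id =
     tr d n 1 i 0 \<circ> (foldr (\<circ>) (chainL d n 1 (i - 1)) id \<circ> ((tr d n i n 0 \<circ> tr d n i n 1) \<circ> foldr (\<circ>) (chainL d n i (n - 1)) id))"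
    by (simp only: foldr_append_id) simp
  also have "\<dots> = tr d n 1 i 0 \<circ> (mkG d n (cyc 1 (i - 1)) (\<lambda>k. 0) \<circ> (mkG d n (\<lambda>k. k) (Dcol d n i) \<circ> mkG d n (cyc i (n - 1)) (\<lambda>k. 0)))"
    by (simp only: D C1 C2)
  also have "mkG d n (\<lambda>k. k) (Dcol d n i) \<circ> mkG d n (cyc i (n - 1)) (\<lambda>k. 0) =
      mkG d n ((\<lambda>k. k) \<circ> cyc i (n - 1)) (\<lambda>k. 0 + Dcol d n i (cyc i (n - 1) k))"
    by (rule mkG_comp[OF d0 cyc_maps]) (use assms in auto)
  also have "mkG d n (cyc 1 (i - 1)) (\<lambda>k. 0) \<circ> \<dots> =
      mkG d n (cyc 1 (i - 1) \<circ> ((\<lambda>k. k) \<circ> cyc i (n - 1))) (\<lambda>k. (0 + Dcol d n i (cyc i (n - 1) k)) + 0)"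
    by (rule mkG_comp[OF d0]) (use cyc_maps[of i "n - 1" n] assms in auto)
  also have "tr d n 1 i 0 \<circ> \<dots> =
      mkG d n (transpose 1 i \<circ> (cyc 1 (i - 1) \<circ> ((\<lambda>k. k) \<circ> cyc i (n - 1))))
       (\<lambda>k. ((0 + Dcol d n i (cyc i (n - 1) k)) + 0) +
         (if (cyc 1 (i - 1) \<circ> ((\<lambda>k. k) \<circ> cyc i (n - 1))) k = 1 then 0
          else if (cyc 1 (i - 1) \<circ> ((\<lambda>k. k) \<circ> cyc i (n - 1))) k = i then d - 0 else 0))"
    (is "_ = mkG d n ?\<sigma> ?c")
    unfolding tr_def
    by (rule mkG_comp[OF d0]) (use cyc_maps[of i "n - 1" n] cyc_maps[of 1 "i - 1" n] assms in auto)
  also have "\<dots> = gam d n"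
    unfolding gam_def
  proof (rule mkG_cong, intro ballI)
    fix k assume k: "k \<in> {1..n}"
    have k': "1 \<le> k" "k \<le> n" using k by auto
    have disj: "k < i - 1 \<or> k = i - 1 \<or> (i \<le> k \<and> k < n - 1) \<or> k = n - 1 \<or> k = n"
      using k' assms by linarith
    consider "k < i - 1" | "k = i - 1" | "i \<le> k \<and> k < n - 1" | "k = n - 1" | "k = n"
      using disj by blast
    thus "?\<sigma> k = sg n k \<and> ?c k mod d = cg d n k mod d"
    proof cases
      case 1
      have e: "cyc i (n - 1) k = k" "cyc 1 (i - 1) k = Suc k" using 1 k' assms by (auto intro: cyc_lo cyc_in)
      show ?thesis unfolding comp_def e using 1 k' assms by (simp add: sg_def cg_def Dcol_def; arith?)
    next
      case 2
      have e: "cyc i (n - 1) k = k" "cyc 1 (i - 1) k = 1" using 2 k' assms by (auto intro: cyc_lo simp: cyc_last)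
      show ?thesis unfolding comp_def e using 2 k' assms by (simp add: sg_def cg_def Dcol_def; arith?)
    next
      case 3
      have e: "cyc i (n - 1) k = Suc k" "cyc 1 (i - 1) (Suc k) = Suc k" using 3 k' assms by (auto intro: cyc_hi cyc_in)
      show ?thesis unfolding comp_def e using 3 k' assms by (simp add: sg_def cg_def Dcol_def; arith?)
    next
      case 4
      have e: "cyc i (n - 1) k = i" "cyc 1 (i - 1) i = i" using 4 k' assms by (auto intro: cyc_hi simp: cyc_last)
      show ?thesis unfolding comp_def e using 4 k' assms by (simp add: sg_def cg_def Dcol_def sucd; arith?)
    next
      case 5
      have e: "cyc i (n - 1) k = n" "cyc 1 (i - 1) n = n" using 5 k' assms by (auto intro: cyc_hi)
      show ?thesis unfolding comp_def e using 5 k' assms by (simp add: sg_def cg_def Dcol_def; arith?)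
    qed
  qed
  finally show ?thesis .
qed

lemma factor_d:
  assumes "d \<ge> 2" "2 \<le> i" "i < n"
  shows "foldr (\<circ>) ([tr d n 1 i (d - 1), tr d n 1 n 0, tr d n 1 n 1] @ chainL d n 1 (i - 1) @ chainL d n i (n - 1)) id = gam d n"
proof -
  have d0: "d > 0" using assms by simp
  have D: "tr d n 1 n 0 \<circ> tr d n 1 n 1 = mkG d n (\<lambda>k. k) (Dcol d n 1)"
    using D_eq[of d 1 n 0] assms by simp
  have C1: "foldr (\<circ>) (chainL d n 1 (i - 1)) id = mkG d n (cyc 1 (i - 1)) (\<lambda>k. 0)"
    by (rule chain_eq) (use assms in auto)
  have C2: "foldr (\<circ>) (chainL d n i (n - 1)) id = mkG d n (cyc i (n - 1)) (\<lambda>k. 0)"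
    by (rule chain_eq) (use assms in auto)
  have "foldr (\<circ>) ([tr d n 1 i (d - 1), tr d n 1 n 0, tr d n 1 n 1] @ chainL d n 1 (i - 1) @ chainL d n i (n - 1)) id =
     tr d n 1 i (d - 1) \<circ> ((tr d n 1 n 0 \<circ> tr d n 1 n 1) \<circ> (foldr (\<circ>) (chainL d n 1 (i - 1)) id \<circ> foldr (\<circ>) (chainL d n i (n - 1)) id))"
    by (simp only: foldr_append_id) (simp add: comp_assoc)
  also have "\<dots> = tr d n 1 i (d - 1) \<circ> (mkG d n (\<lambda>k. k) (Dcol d n 1) \<circ> (mkG d n (cyc 1 (i - 1)) (\<lambda>k. 0) \<circ> mkG d n (cyc i (n - 1)) (\<lambda>k. 0)))"
    by (simp only: D C1 C2)
  also have "mkG d n (cyc 1 (i - 1)) (\<lambda>k. 0) \<circ> mkG d n (cyc i (n - 1)) (\<lambda>k. 0) =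
      mkG d n (cyc 1 (i - 1) \<circ> cyc i (n - 1)) (\<lambda>k. 0 + 0)"
    by (rule mkG_comp[OF d0 cyc_maps]) (use assms in auto)
  also have "mkG d n (\<lambda>k. k) (Dcol d n 1) \<circ> \<dots> =
      mkG d n ((\<lambda>k. k) \<circ> (cyc 1 (i - 1) \<circ> cyc i (n - 1))) (\<lambda>k. (0 + 0) + Dcol d n 1 ((cyc 1 (i - 1) \<circ> cyc i (n - 1)) k))"
    by (rule mkG_comp[OF d0]) (use cyc_maps[of i "n - 1" n] cyc_maps[of 1 "i - 1" n] assms in auto)
  also have "tr d n 1 i (d - 1) \<circ> \<dots> =
      mkG d n (transpose 1 i \<circ> ((\<lambda>k. k) \<circ> (cyc 1 (i - 1) \<circ> cyc i (n - 1))))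
       (\<lambda>k. ((0 + 0) + Dcol d n 1 ((cyc 1 (i - 1) \<circ> cyc i (n - 1)) k)) +
         (if ((\<lambda>k. k) \<circ> (cyc 1 (i - 1) \<circ> cyc i (n - 1))) k = 1 then d - 1
          else if ((\<lambda>k. k) \<circ> (cyc 1 (i - 1) \<circ> cyc i (n - 1))) k = i then d - (d - 1) else 0))"
    (is "_ = mkG d n ?\<sigma> ?c")
    unfolding tr_def
    by (rule mkG_comp[OF d0]) (use cyc_maps[of i "n - 1" n] cyc_maps[of 1 "i - 1" n] assms in auto)
  also have "\<dots> = gam d n"
    unfolding gam_def
  proof (rule mkG_cong, intro ballI)
    fix k assume k: "k \<in> {1..n}"
    have k': "1 \<le> k" "k \<le> n" using k by auto
    have disj: "k < i - 1 \<or> k = i - 1 \<or> (i \<le> k \<and> k < n - 1) \<or> k = n - 1 \<or> k = n"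
      using k' assms by linarith
    consider "k < i - 1" | "k = i - 1" | "i \<le> k \<and> k < n - 1" | "k = n - 1" | "k = n"
      using disj by blast
    thus "?\<sigma> k = sg n k \<and> ?c k mod d = cg d n k mod d"
    proof cases
      case 1
      have e: "cyc i (n - 1) k = k" "cyc 1 (i - 1) k = Suc k" using 1 k' assms by (auto intro: cyc_lo cyc_in)
      show ?thesis unfolding comp_def e using 1 k' assms by (simp add: sg_def cg_def Dcol_def; arith?)
    next
      case 2
      have e: "cyc i (n - 1) k = k" "cyc 1 (i - 1) k = 1" using 2 k' assms by (auto intro: cyc_lo simp: cyc_last)
      show ?thesis unfolding comp_def e using 2 k' assms by (simp add: sg_def cg_def Dcol_def; arith?)
    next
      case 3
      have e: "cyc i (n - 1) k = Suc k" "cyc 1 (i - 1) (Suc k) = Suc k" using 3 k' assms by (auto intro: cyc_hi cyc_in)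
      show ?thesis unfolding comp_def e using 3 k' assms by (simp add: sg_def cg_def Dcol_def; arith?)
    next
      case 4
      have e: "cyc i (n - 1) k = i" "cyc 1 (i - 1) i = i" using 4 k' assms by (auto intro: cyc_hi simp: cyc_last)
      show ?thesis unfolding comp_def e using 4 k' assms by (simp add: sg_def cg_def Dcol_def sucd; arith?)
    next
      case 5
      have e: "cyc i (n - 1) k = n" "cyc 1 (i - 1) n = n" using 5 k' assms by (auto intro: cyc_hi)
      show ?thesis unfolding comp_def e using 5 k' assms by (simp add: sg_def cg_def Dcol_def; arith?)
    qed
  qed
  finally show ?thesis .
qed



lemma act_mkG_single:
  assumes "d > 0" "i \<in> {1..n}" "j0 \<in> {1..n}" "\<forall>j\<in>{1..n}. \<sigma> j = i \<longleftrightarrow> j = j0"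
  shows "act d n (mkG d n \<sigma> c) x i = zeta d ^ c j0 * x j0"
proof -
  have "act d n (mkG d n \<sigma> c) x i = (\<Sum>j\<in>{1..n}. (if j = j0 then zeta d ^ c j * x j else 0))"
    unfolding act_def by (rule sum.cong) (use assms in \<open>auto simp: gmat_mkG\<close>)
  also have "\<dots> = zeta d ^ c j0 * x j0" using assms(3) by simp
  finally show ?thesis .
qed

lemma act_gam1:
  assumes "d \<ge> 2" "n \<ge> 2"
  shows "act d n (gam d n) x 1 = zeta d * x (n - 1)"
proof -
  have "act d n (gam d n) x 1 = zeta d ^ cg d n (n - 1) * x (n - 1)"
    unfolding gam_def by (rule act_mkG_single) (use assms in \<open>auto simp: sg_def\<close>)
  thus ?thesis using assms by (simp add: cg_def)
qed

lemma act_gam2: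
  assumes "d \<ge> 2" "2 \<le> i" "i \<le> n - 1"
  shows "act d n (gam d n) x i = x (i - 1)"
proof -
  have "act d n (gam d n) x i = zeta d ^ cg d n (i - 1) * x (i - 1)"
    unfolding gam_def by (rule act_mkG_single) (use assms in \<open>auto simp: sg_def\<close>)
  moreover have "i - 1 \<noteq> n - 1" "i - 1 \<noteq> n" using assms by auto
  ultimately show ?thesis by (simp add: cg_def)
qed

lemma act_gam3:
  assumes "d \<ge> 2" "n \<ge> 2"
  shows "act d n (gam d n) x n = zeta d ^ (d - 1) * x n"
proof -
  have "act d n (gam d n) x n = zeta d ^ cg d n n * x n"
    unfolding gam_def by (rule act_mkG_single) (use assms in \<open>auto simp: sg_def\<close>)
  thus ?thesis using assms by (simp add: cg_def)
qed

lemma zeta_ne1: "d \<ge> 2 \<Longrightarrow> zeta d \<noteq> 1"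
  using zeta_pow_eq1[of d 1] by auto

lemma zeta_dm1_ne1: "d \<ge> 2 \<Longrightarrow> zeta d ^ (d - 1) \<noteq> 1"
proof
  assume d: "d \<ge> 2" and "zeta d ^ (d - 1) = 1"
  hence "d dvd d - 1" using zeta_pow_eq1[of d "d - 1"] by simp
  moreover have "0 < d - 1" "d - 1 < d" using d by auto
  ultimately show False using nat_dvd_not_less by blast
qed

lemma gam_fpf:
  assumes "d \<ge> 2" "n \<ge> 2" "\<forall>k\<in>{1..n}. act d n (gam d n) x k = x k"
  shows "\<forall>k\<in>{1..n}. x k = 0"
proof -
  have chain: "1 \<le> k \<Longrightarrow> k \<le> n - 1 \<Longrightarrow> x k = x 1" for k
  proof (induction k)
    case 0 thus ?case by simp
  next
    case (Suc k)
    show ?case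
    proof (cases "k = 0")
      case True thus ?thesis by simp
    next
      case False
      have "x (Suc k) = act d n (gam d n) x (Suc k)" using assms(3) Suc.prems by auto
      also have "\<dots> = x k" using act_gam2[OF assms(1), of "Suc k" n x] Suc.prems False by simp
      also have "\<dots> = x 1" using Suc.IH Suc.prems False by simp
      finally show ?thesis .
    qed
  qed
  have "x 1 = act d n (gam d n) x 1" using assms(2,3) by auto
  also have "\<dots> = zeta d * x (n - 1)" by (rule act_gam1[OF assms(1,2)])
  also have "x (n - 1) = x 1" using chain[of "n - 1"] assms(2) by simp
  finally have "(zeta d - 1) * x 1 = 0" by (simp add: algebra_simps)
  hence x1: "x 1 = 0" using zeta_ne1[OF assms(1)] by simp
  have "x n = act d n (gam d n) x n" using assms(2,3) by auto
  also have "\<dots> = zeta d ^ (d - 1) * x n" by (rule act_gam3[OF assms(1,2)])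
  finally have "(zeta d ^ (d - 1) - 1) * x n = 0" by (simp add: algebra_simps)
  hence xn: "x n = 0" using zeta_dm1_ne1[OF assms(1)] by simp
  show ?thesis
  proof
    fix k assume k: "k \<in> {1..n}"
    show "x k = 0"
    proof (cases "k = n")
      case True thus ?thesis using xn by simp
    next
      case False
      hence "k \<le> n - 1" using k by auto
      thus ?thesis using chain[of k] k x1 by simp
    qed
  qed
qed

lemma ginv_id: "ginv d n id = id"
proof
  fix x
  show "ginv d n id x = id x"
    by (simp add: ginv_def inv_into_f_f)
qed

lemma abs_len_id: "abs_len d n id = 0"
  using abs_len_le[of "[]" d n id] by simp

lemma gam_len:
  assumes "d \<ge> 2" "n \<ge> 2" "set ts \<subseteq> reflections d n" "foldr (\<circ>) ts id = gam d n" "length ts \<le> n"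
  shows "length ts = n \<and> (\<forall>r. \<exists>z. \<forall>j<length ts. bt d n (ts ! j) z = r j)"
proof (rule solve_lemma)
  show "d > 0" using assms by simp
  show "set ts \<subseteq> reflections d n" by fact
  show "length ts \<le> n" by fact
  fix x assume "\<forall>t\<in>set ts. bt d n t x = 0"
  hence "\<forall>k\<in>{1..n}. act d n (foldr (\<circ>) ts id) x k = x k"
    using fix_lemma[of d ts n x] assms by auto
  thus "\<forall>k\<in>{1..n}. x k = 0" using gam_fpf[OF assms(1,2)] assms(4) by simp
qed

lemma abs_len_gam:
  assumes "d \<ge> 2" "n \<ge> 2"
  shows "abs_len d n (gam d n) = n"
proof -
  let ?L = "[tr d n 1 n 0, tr d n 1 n ((0 + 1) mod d)] @ chainL d n 1 (n - 1)"
  have L: "set ?L \<subseteq> reflections d n" "foldr (\<circ>) ?L id = gam d n" "length ?L = n"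
    using assms factor_e[OF assms, of 0] chain_refl[of d 1 "n - 1" n] chain_len[of d n 1 "n - 1"]
    by (auto intro!: tr_refl)
  obtain gs where gs: "length gs = abs_len d n (gam d n)" "set gs \<subseteq> reflections d n" "foldr (\<circ>) gs id = gam d n"
    using abs_len_ex[OF L(1,2)] by blast
  have "abs_len d n (gam d n) \<le> n" using abs_len_le[OF L(1,2)] L(3) by simp
  thus ?thesis using gam_len[OF assms gs(2,3)] gs(1) by simp
qed

lemma NC_intro:
  assumes "d \<ge> 2" "n \<ge> 2" "set (us @ ws) \<subseteq> reflections d n" "length (us @ ws) = n"
    "foldr (\<circ>) (us @ ws) id = gamma d n"
  shows "foldr (\<circ>) us id \<in> NC d n"
proof -
  have d0: "d > 0" using assms by simp
  let ?u = "foldr (\<circ>) us id" and ?w = "foldr (\<circ>) ws id"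
  have ru: "set us \<subseteq> reflections d n" and rw: "set ws \<subseteq> reflections d n" using assms(3) by auto
  have uG: "?u \<in> Gddn d n" by (rule foldr_refl_G[OF d0 ru])
  have g: "gamma d n = ?u \<circ> ?w" using assms(5) by (simp only: foldr_append_id)
  have w: "ginv d n ?u \<circ> gamma d n = ?w"
    unfolding g by (simp add: comp_assoc[symmetric] ginv_left[OF d0 uG])
  have lg: "abs_len d n (gamma d n) = n" using abs_len_gam[OF assms(1,2)] gamma_eq[OF assms(1,2)] by simp
  have lu: "abs_len d n ?u \<le> length us" by (rule abs_len_le[OF ru]) simp
  have lw: "abs_len d n ?w \<le> length ws" by (rule abs_len_le[OF rw]) simp
  have tri: "abs_len d n (?u \<circ> ?w) \<le> abs_len d n ?u + abs_len d n ?w"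
    by (rule abs_len_triangle[OF ru _ rw]) simp_all
  have eq: "abs_len d n (gamma d n) = abs_len d n ?u + abs_len d n (ginv d n ?u \<circ> gamma d n)"
    using lg lu lw tri assms(4) unfolding w g[symmetric] by simp
  show ?thesis
    unfolding NC_def abs_le_def
    using uG eq by (simp add: abs_len_id ginv_id)
qed



lemma tr_at1: "d > 0 \<Longrightarrow> n \<ge> 1 \<Longrightarrow> tr d n 1 b t (1, 0) = (b, t mod d)"
  unfolding tr_def by (simp add: mkG_in)

lemma in_Rset:
  assumes "d \<ge> 2" "n \<ge> 2" "set (us @ ws) \<subseteq> reflections d n" "length (us @ ws) = n"
    "foldr (\<circ>) (us @ ws) id = gam d n" "foldr (\<circ>) us id (1, 0) = (i, s)"
  shows "Rset d n i s \<noteq> {}"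
proof -
  have "foldr (\<circ>) us id \<in> NC d n"
    by (rule NC_intro) (use assms gamma_eq[OF assms(1,2)] in auto)
  thus ?thesis using assms(6) unfolding Rset_def by blast
qed

lemma nonempty:
  assumes d: "d \<ge> 2" and n: "n \<ge> 2" and i: "i \<in> {1..n}" and s: "s < d"
    and nf: "\<not> ((i = 1 \<and> 2 \<le> s \<and> s < d) \<or> (2 \<le> i \<and> i < n \<and> 1 \<le> s \<and> s < d - 1))"
  shows "Rset d n i s \<noteq> {}"
proof -
  have d0: "d > 0" using d by simp
  have cr: "set (chainL d n a m) \<subseteq> reflections d n" if "1 \<le> a" "m \<le> n" for a m
    using chain_refl[OF d0 that] .
  have trr: "tr d n a b t \<in> reflections d n" if "a \<in> {1..n}" "b \<in> {1..n}" "a \<noteq> b" "t \<le> d" for a b t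
    using tr_refl[OF d0 that] .
  have sd: "(s + 1) mod d \<le> d" using d0 by (simp add: less_imp_le)
  consider "i = 1" "s = 0" | "i = 1" "s = 1" | "i = n" | "2 \<le> i" "i < n" "s = 0" | "2 \<le> i" "i < n" "s = d - 1"
    using i s nf d by fastforce
  thus ?thesis
  proof cases
    case 1
    let ?ws = "[tr d n 1 n 0, tr d n 1 n ((0 + 1) mod d)] @ chainL d n 1 (n - 1)"
    show ?thesis
    proof (rule in_Rset[OF d n, of "[]" ?ws])
      show "set ([] @ ?ws) \<subseteq> reflections d n" using n d d0 cr[of 1 "n - 1"] by (auto intro!: trr)
      show "length ([] @ ?ws) = n" using n by (simp add: chain_len)
      show "foldr (\<circ>) ([] @ ?ws) id = gam d n" using factor_e[OF d n, of 0] d by simp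
      show "foldr (\<circ>) [] id (1, 0) = (i, s)" using 1 by simp
    qed
  next
    case 2
    let ?us = "[tr d n 1 n 0, tr d n 1 n ((0 + 1) mod d)]"
    let ?ws = "chainL d n 1 (n - 1)"
    have D: "tr d n 1 n 0 \<circ> tr d n 1 n ((0 + 1) mod d) = mkG d n (\<lambda>k. k) (Dcol d n 1)"
      by (rule D_eq) (use d n in auto)
    show ?thesis
    proof (rule in_Rset[OF d n, of ?us ?ws])
      show "set (?us @ ?ws) \<subseteq> reflections d n" using n d d0 cr[of 1 "n - 1"] by (auto intro!: trr)
      show "length (?us @ ?ws) = n" using n by (simp add: chain_len)
      show "foldr (\<circ>) (?us @ ?ws) id = gam d n" using factor_e[OF d n, of 0] d by simp
      have "foldr (\<circ>) ?us id = mkG d n (\<lambda>k. k) (Dcol d n 1)" using D by simp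
      thus "foldr (\<circ>) ?us id (1, 0) = (i, s)" using 2 d n by (simp add: mkG_in Dcol_def)
    qed
  next
    case 3
    let ?us = "[tr d n 1 n s]"
    let ?ws = "[tr d n 1 n ((s + 1) mod d)] @ chainL d n 1 (n - 1)"
    show ?thesis
    proof (rule in_Rset[OF d n, of ?us ?ws])
      show "set (?us @ ?ws) \<subseteq> reflections d n" using n d d0 s sd cr[of 1 "n - 1"] by (auto intro!: trr)
      show "length (?us @ ?ws) = n" using n by (simp add: chain_len)
      show "foldr (\<circ>) (?us @ ?ws) id = gam d n" using factor_e[OF d n s] by simp
      have "tr d n 1 n s (1, 0) = (n, s mod d)" by (rule tr_at1) (use d0 n in auto)
      thus "foldr (\<circ>) ?us id (1, 0) = (i, s)" using 3 s by simp
    qed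
  next
    case 4
    let ?us = "[tr d n 1 i 0]"
    let ?ws = "chainL d n 1 (i - 1) @ [tr d n i n 0, tr d n i n 1] @ chainL d n i (n - 1)"
    show ?thesis
    proof (rule in_Rset[OF d n, of ?us ?ws])
      show "set (?us @ ?ws) \<subseteq> reflections d n"
        using 4 n d d0 cr[of 1 "i - 1"] cr[of i "n - 1"] by (auto intro!: trr)
      show "length (?us @ ?ws) = n" using 4 by (simp add: chain_len)
      show "foldr (\<circ>) (?us @ ?ws) id = gam d n" using factor_c[OF d 4(1,2)] by simp
      have "tr d n 1 i 0 (1, 0) = (i, 0 mod d)" by (rule tr_at1) (use d0 n in auto)
      thus "foldr (\<circ>) ?us id (1, 0) = (i, s)" using 4 by simp
    qed
  next
    case 5
    let ?us = "[tr d n 1 i (d - 1)]"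
    let ?ws = "[tr d n 1 n 0, tr d n 1 n 1] @ chainL d n 1 (i - 1) @ chainL d n i (n - 1)"
    show ?thesis
    proof (rule in_Rset[OF d n, of ?us ?ws])
      show "set (?us @ ?ws) \<subseteq> reflections d n"
        using 5 n d d0 cr[of 1 "i - 1"] cr[of i "n - 1"] by (auto intro!: trr)
      show "length (?us @ ?ws) = n" using 5 by (simp add: chain_len)
      show "foldr (\<circ>) (?us @ ?ws) id = gam d n" using factor_d[OF d 5(1,2)] by simp
      have "tr d n 1 i (d - 1) (1, 0) = (i, (d - 1) mod d)" by (rule tr_at1) (use d0 n in auto)
      thus "foldr (\<circ>) ?us id (1, 0) = (i, s)" using 5 d0 by simp
    qed
  qed
qed



lemma tr_invol:
  assumes "d > 0" "a \<in> {1..n}" "b \<in> {1..n}" "a \<noteq> b" "t \<le> d"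
  shows "tr d n a b t \<circ> tr d n a b t = id"
proof -
  have "tr d n a b t \<circ> tr d n a b t = mkG d n (transpose a b \<circ> transpose a b)
     (\<lambda>k. (if k = a then t else if k = b then d - t else 0) +
          (if transpose a b k = a then t else if transpose a b k = b then d - t else 0))"
    unfolding tr_def by (rule mkG_comp[OF assms(1) transpose_maps[OF assms(2,3)]])
  also have "\<dots> = id"
    by (rule mkG_id) (use assms in \<open>auto simp: transpose_def\<close>)
  finally show ?thesis .
qed

lemma ginv_G:
  assumes d: "d > 0" and g: "g \<in> Gddn d n"
  shows "ginv d n g \<in> Gddn d n"
proof -
  obtain \<sigma> c where s: "\<sigma> permutes {1..n}" "(\<Sum>k\<in>{1..n}. c k) mod d = 0" "g = mkG d n \<sigma> c"
    by (rule G_mkG[OF g])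
  define \<tau> where "\<tau> = inv_into UNIV \<sigma>"
  have tp: "\<tau> permutes {1..n}" unfolding \<tau>_def by (rule permutes_inv[OF s(1)])
  define c' where "c' = (\<lambda>k. d - c (\<tau> k) mod d)"
  let ?v = "mkG d n \<tau> c'"
  have sum1: "(\<Sum>k\<in>{1..n}. c' k) = (\<Sum>k\<in>{1..n}. d - c k mod d)"
  proof -
    have "(\<Sum>k\<in>{1..n}. d - c k mod d) = sum ((\<lambda>k. d - c k mod d) \<circ> \<tau>) {1..n}"
      by (rule sum.permute[OF tp])
    thus ?thesis by (simp add: c'_def comp_def)
  qed
  have sum2: "(\<Sum>k\<in>{1..n}. d - c k mod d) + (\<Sum>k\<in>{1..n}. c k mod d) = n * d"
  proof -
    have "(\<Sum>k\<in>{1..n}. d - c k mod d) + (\<Sum>k\<in>{1..n}. c k mod d) = (\<Sum>k\<in>{1..n}. (d - c k mod d) + c k mod d)"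
      by (simp only: sum.distrib)
    also have "\<dots> = (\<Sum>k\<in>{1..n}. d)" by (rule sum.cong) (use d in \<open>auto simp: less_imp_le\<close>)
    finally show ?thesis by simp
  qed
  have dv1: "d dvd (\<Sum>k\<in>{1..n}. c k mod d)"
    using s(2) mod_sum_eq[of c d "{1..n}"] by (simp add: dvd_eq_mod_eq_0)
  have "d dvd (\<Sum>k\<in>{1..n}. d - c k mod d)"
  proof -
    have "(\<Sum>k\<in>{1..n}. d - c k mod d) = n * d - (\<Sum>k\<in>{1..n}. c k mod d)" using sum2 by simp
    thus ?thesis using dv1 by (simp add: dvd_diff_nat)
  qed
  hence vG: "?v \<in> Gddn d n" using sum1 by (intro mkG_in_G[OF tp]) (simp add: dvd_eq_mod_eq_0)
  have m: "\<forall>k\<in>{1..n}. \<sigma> k \<in> {1..n}" by (metis s(1) permutes_in_image)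
  have vg: "?v \<circ> g = id"
  proof -
    have "?v \<circ> g = mkG d n (\<tau> \<circ> \<sigma>) (\<lambda>k. c k + c' (\<sigma> k))"
      unfolding s(3) by (rule mkG_comp[OF d m])
    also have "\<dots> = id"
    proof (rule mkG_id, intro ballI conjI)
      fix k assume k: "k \<in> {1..n}"
      have tk: "\<tau> (\<sigma> k) = k" unfolding \<tau>_def by (metis s(1) permutes_inverses(2))
      show "(\<tau> \<circ> \<sigma>) k = k" using tk by simp
      have "c k + c' (\<sigma> k) = c k + (d - c k mod d)" by (simp add: c'_def tk)
      also have "(c k + (d - c k mod d)) mod d = (c k mod d + (d - c k mod d)) mod d"
        by (simp add: mod_add_left_eq)
      also have "c k mod d + (d - c k mod d) = d" using d by (simp add: less_imp_le)
      finally show "(c k + c' (\<sigma> k)) mod d = 0" by simp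
    qed
    finally show ?thesis .
  qed
  have "ginv d n g = (?v \<circ> g) \<circ> ginv d n g" using vg by simp
  also have "\<dots> = ?v \<circ> (g \<circ> ginv d n g)" by (simp add: comp_assoc)
  also have "\<dots> = ?v" using ginv_right[OF d g] by simp
  finally show ?thesis using vG by simp
qed

definition Nf :: "nat \<Rightarrow> (nat \<times> nat \<Rightarrow> nat \<times> nat) \<Rightarrow> nat set" where
  "Nf n u = {k \<in> {1..n}. u (k, 0) \<noteq> (k, 0)}"

lemma gen_step:
  assumes d: "d > 0" and u: "u \<in> Gddn d n" and ne: "Nf n u \<noteq> {}"
  shows "\<exists>ps u'. set ps \<subseteq> reflections d n \<and> u' \<in> Gddn d n \<and> u = foldr (\<circ>) ps id \<circ> u' \<and> Nf n u' \<subset> Nf n u"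
proof -
  obtain \<sigma> c where s: "\<sigma> permutes {1..n}" "(\<Sum>k\<in>{1..n}. c k) mod d = 0" "u = mkG d n \<sigma> c"
    by (rule G_mkG[OF u])
  have uv: "u (k, 0) = (\<sigma> k, c k mod d)" if "k \<in> {1..n}" for k
    using that d by (simp add: s(3) mkG_in)
  have inj: "\<sigma> x = \<sigma> y \<Longrightarrow> x = y" for x y by (metis s(1) permutes_inj inj_eq)
  have sin: "\<sigma> k \<in> {1..n}" if "k \<in> {1..n}" for k by (metis that s(1) permutes_in_image)
  show ?thesis
  proof (cases "\<exists>k\<in>{1..n}. \<sigma> k \<noteq> k")
    case True
    then obtain k where k: "k \<in> {1..n}" "\<sigma> k \<noteq> k" by blast
    define j where "j = \<sigma> k"
    have j: "j \<in> {1..n}" "j \<noteq> k" using k sin unfolding j_def by auto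
    define t where "t = tr d n k j (c k mod d)"
    have ckd: "c k mod d \<le> d" using d by (simp add: less_imp_le)
    have tR: "t \<in> reflections d n" unfolding t_def by (rule tr_refl[OF d k(1) j(1) j(2)[symmetric] ckd])
    have tG: "t \<in> Gddn d n" using tR by (rule refl_G)
    have tt: "t \<circ> t = id" unfolding t_def by (rule tr_invol[OF d k(1) j(1) j(2)[symmetric] ckd])
    let ?u' = "t \<circ> u"
    have u'G: "?u' \<in> Gddn d n" by (rule Gddn_comp[OF d tG u])
    have ueq: "u = foldr (\<circ>) [t] id \<circ> ?u'" using tt by (simp add: comp_assoc[symmetric])
    have tv: "t (l, x) = (transpose k j l, (x + (if l = k then c k mod d else if l = j then d - c k mod d else 0)) mod d)"
      if "l \<in> {1..n}" "x < d" for l x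
      using that unfolding t_def tr_def by (simp add: mkG_in)
    have sub: "Nf n ?u' \<subseteq> Nf n u"
    proof
      fix l assume l: "l \<in> Nf n ?u'"
      hence l1: "l \<in> {1..n}" by (simp add: Nf_def)
      show "l \<in> Nf n u"
      proof (rule ccontr)
        assume "l \<notin> Nf n u"
        hence ul: "u (l, 0) = (l, 0)" using l1 by (simp add: Nf_def)
        hence sl: "\<sigma> l = l" using uv[OF l1] by simp
        have "l \<noteq> k" using sl k(2) by auto
        moreover have "l \<noteq> j" using sl inj[of l k] j(2) unfolding j_def by auto
        ultimately have "?u' (l, 0) = (l, 0)" using ul tv[OF l1, of 0] d by (simp add: transpose_def)
        thus False using l by (simp add: Nf_def)
      qed
    qed
    have kin: "k \<in> Nf n u" using k uv[OF k(1)] by (simp add: Nf_def)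
    have "?u' (k, 0) = t (j, c k mod d)" using uv[OF k(1)] by (simp add: j_def)
    also have "\<dots> = (k, (c k mod d + (d - c k mod d)) mod d)"
      using tv[OF j(1), of "c k mod d"] d j(2) by simp
    also have "c k mod d + (d - c k mod d) = d" using d by (simp add: less_imp_le)
    finally have "k \<notin> Nf n ?u'" by (simp add: Nf_def)
    hence "Nf n ?u' \<subset> Nf n u" using sub kin by blast
    thus ?thesis using tR u'G ueq by (intro exI[of _ "[t]"] exI[of _ ?u']) simp
  next
    case False
    hence sid: "\<sigma> k = k" if "k \<in> {1..n}" for k using that by blast
    obtain k where k: "k \<in> Nf n u" using ne by blast
    have k1: "k \<in> {1..n}" using k by (simp add: Nf_def)
    have ck: "c k mod d \<noteq> 0" using k uv[OF k1] sid[OF k1] by (simp add: Nf_def)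
    have "\<exists>l\<in>{1..n}. l \<noteq> k \<and> c l mod d \<noteq> 0"
    proof (rule ccontr)
      assume "\<not> ?thesis"
      hence z: "\<forall>l\<in>{1..n} - {k}. c l mod d = 0" by auto
      have "(\<Sum>l\<in>{1..n}. c l mod d) = c k mod d + (\<Sum>l\<in>{1..n} - {k}. c l mod d)"
        using k1 by (simp add: sum.remove)
      also have "(\<Sum>l\<in>{1..n} - {k}. c l mod d) = 0" using z by simp
      finally have "(\<Sum>l\<in>{1..n}. c l mod d) mod d = c k mod d" by simp
      hence "(\<Sum>l\<in>{1..n}. c l) mod d = c k mod d" by (simp add: mod_sum_eq)
      thus False using s(2) ck by simp
    qed
    then obtain l where l: "l \<in> {1..n}" "l \<noteq> k" "c l mod d \<noteq> 0" by blast
    define e where "e = c k mod d"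
    have e: "0 < e" "e < d" using ck d unfolding e_def by auto
    define A where "A = tr d n k l 0"
    define B where "B = tr d n k l (d - e)"
    have AR: "A \<in> reflections d n" unfolding A_def by (rule tr_refl[OF d k1 l(1) l(2)[symmetric]]) simp
    have BR: "B \<in> reflections d n" unfolding B_def by (rule tr_refl[OF d k1 l(1) l(2)[symmetric]]) simp
    have AA: "A \<circ> A = id" unfolding A_def by (rule tr_invol[OF d k1 l(1) l(2)[symmetric]]) simp
    have BB: "B \<circ> B = id" unfolding B_def by (rule tr_invol[OF d k1 l(1) l(2)[symmetric]]) simp
    let ?u' = "A \<circ> (B \<circ> u)"
    have u'G: "?u' \<in> Gddn d n"
      by (rule Gddn_comp[OF d refl_G[OF AR] Gddn_comp[OF d refl_G[OF BR] u]])
    have ueq: "u = foldr (\<circ>) [B, A] id \<circ> ?u'"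
    proof -
      have "foldr (\<circ>) [B, A] id \<circ> ?u' = B \<circ> ((A \<circ> A) \<circ> (B \<circ> u))" by (simp add: comp_assoc)
      also have "\<dots> = (B \<circ> B) \<circ> u" using AA by (simp add: comp_assoc)
      finally show ?thesis using BB by simp
    qed
    have Av: "A (m, x) = (transpose k l m, (x + (if m = k then 0 else if m = l then d - 0 else 0)) mod d)"
      if "m \<in> {1..n}" "x < d" for m x
      using that unfolding A_def tr_def by (simp add: mkG_in)
    have Bv: "B (m, x) = (transpose k l m, (x + (if m = k then d - e else if m = l then d - (d - e) else 0)) mod d)"
      if "m \<in> {1..n}" "x < d" for m x
      using that unfolding B_def tr_def by (simp add: mkG_in)
    have sub: "Nf n ?u' \<subseteq> Nf n u"
    proof
      fix m assume m: "m \<in> Nf n ?u'"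
      hence m1: "m \<in> {1..n}" by (simp add: Nf_def)
      show "m \<in> Nf n u"
      proof (rule ccontr)
        assume "m \<notin> Nf n u"
        hence um: "u (m, 0) = (m, 0)" using m1 by (simp add: Nf_def)
        hence cm: "c m mod d = 0" using uv[OF m1] by simp
        have "m \<noteq> k" using cm ck by auto
        moreover have "m \<noteq> l" using cm l(3) by auto
        ultimately have "?u' (m, 0) = (m, 0)" using um Bv[OF m1, of 0] Av[OF m1, of 0] d
          by (simp add: transpose_def)
        thus False using m by (simp add: Nf_def)
      qed
    qed
    have kin: "k \<in> Nf n u" by (rule k)
    have "?u' (k, 0) = A (B (k, e))" using uv[OF k1] sid[OF k1] by (simp add: e_def)
    also have "B (k, e) = (l, (e + (d - e)) mod d)" using Bv[OF k1 e(2)] by simp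
    also have "(e + (d - e)) mod d = 0" using e by simp
    also have "A (l, 0) = (k, 0)" using Av[OF l(1), of 0] d l(2) by simp
    finally have "k \<notin> Nf n ?u'" by (simp add: Nf_def)
    hence "Nf n ?u' \<subset> Nf n u" using sub kin by blast
    thus ?thesis using AR BR u'G ueq by (intro exI[of _ "[B, A]"] exI[of _ ?u']) simp
  qed
qed

lemma generation:
  assumes d: "d > 0"
  shows "u \<in> Gddn d n \<Longrightarrow> \<exists>ts. set ts \<subseteq> reflections d n \<and> foldr (\<circ>) ts id = u"
proof (induction "card (Nf n u)" arbitrary: u rule: less_induct)
  case less
  show ?case
  proof (cases "Nf n u = {}")
    case True
    obtain \<sigma> c where s: "\<sigma> permutes {1..n}" "(\<Sum>k\<in>{1..n}. c k) mod d = 0" "u = mkG d n \<sigma> c"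
      by (rule G_mkG[OF less.prems])
    have "u = id" unfolding s(3)
    proof (rule mkG_id, intro ballI)
      fix k assume k: "k \<in> {1..n}"
      hence "u (k, 0) = (k, 0)" using True by (auto simp: Nf_def)
      thus "\<sigma> k = k \<and> c k mod d = 0" using k d by (simp add: s(3) mkG_in)
    qed
    thus ?thesis by (intro exI[of _ "[]"]) simp
  next
    case False
    then obtain ps u' where p: "set ps \<subseteq> reflections d n" "u' \<in> Gddn d n"
      "u = foldr (\<circ>) ps id \<circ> u'" "Nf n u' \<subset> Nf n u"
      using gen_step[OF d less.prems] by blast
    have "card (Nf n u') < card (Nf n u)"
      by (rule psubset_card_mono[OF _ p(4)]) (simp add: Nf_def)
    then obtain ts where ts: "set ts \<subseteq> reflections d n" "foldr (\<circ>) ts id = u'"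
      using less.hyps p(2) by blast
    show ?thesis using p ts
      by (intro exI[of _ "ps @ ts"]) (simp add: foldr_append_id del: foldr_append)
  qed
qed



lemma bt_diff: "bt d n t (\<lambda>k. a k - b k) = bt d n t a - bt d n t b"
  unfolding bt_def by (simp add: right_diff_distrib sum_subtractf)

lemma chain_const:
  fixes f :: "nat \<Rightarrow> 'a" and a b k :: nat
  assumes "\<forall>k. a < k \<and> k \<le> b \<longrightarrow> f k = f (k - 1)"
  shows "a \<le> k \<Longrightarrow> k \<le> b \<Longrightarrow> f k = f a"
proof (induction k)
  case 0 thus ?case by simp
next
  case (Suc k)
  show ?case
  proof (cases "a = Suc k")
    case True thus ?thesis by simp
  next
    case False
    hence "a \<le> k" using Suc.prems by simp
    hence "f k = f a" using Suc by simp
    moreover have "f (Suc k) = f k" using assms[rule_format, of "Suc k"] Suc.prems \<open>a \<le> k\<close> by simp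
    ultimately show ?thesis by simp
  qed
qed

lemma gam_fact:
  assumes "d \<ge> 2" "n \<ge> 2"
  shows "\<exists>L. set L \<subseteq> reflections d n \<and> foldr (\<circ>) L id = gam d n \<and> length L = n"
proof -
  let ?L = "[tr d n 1 n 0, tr d n 1 n ((0 + 1) mod d)] @ chainL d n 1 (n - 1)"
  have "set ?L \<subseteq> reflections d n" "foldr (\<circ>) ?L id = gam d n" "length ?L = n"
    using assms factor_e[OF assms, of 0] chain_refl[of d 1 "n - 1" n] chain_len[of d n 1 "n - 1"]
    by (auto intro!: tr_refl)
  thus ?thesis by blast
qed

lemma emptiness:
  assumes d: "d \<ge> 2" and n: "n \<ge> 2" and uN: "u \<in> NC d n" and u1: "u (1, 0) = (i, s)"
    and i: "i \<in> {1..n}" and s: "s < d"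
    and forb: "(i = 1 \<and> 2 \<le> s \<and> s < d) \<or> (2 \<le> i \<and> i < n \<and> 1 \<le> s \<and> s < d - 1)"
  shows False
proof -
  have d0: "d > 0" using d by simp
  have uG: "u \<in> Gddn d n" and ab: "abs_le d n u (gamma d n)" using uN by (auto simp: NC_def)
  have gg: "gamma d n = gam d n" by (rule gamma_eq[OF d n])
  obtain L where L: "set L \<subseteq> reflections d n" "foldr (\<circ>) L id = gam d n" "length L = n"
    using gam_fact[OF d n] by blast
  have gamG: "gam d n \<in> Gddn d n" using foldr_refl_G[OF d0 L(1)] L(2) by simp
  define w where "w = ginv d n u \<circ> gam d n"
  have wG: "w \<in> Gddn d n" unfolding w_def by (rule Gddn_comp[OF d0 ginv_G[OF d0 uG] gamG])
  obtain ts0 where ts0: "set ts0 \<subseteq> reflections d n" "foldr (\<circ>) ts0 id = u"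
    using generation[OF d0 uG] by blast
  obtain ts1 where ts1: "set ts1 \<subseteq> reflections d n" "foldr (\<circ>) ts1 id = w"
    using generation[OF d0 wG] by blast
  obtain us where us: "length us = abs_len d n u" "set us \<subseteq> reflections d n" "foldr (\<circ>) us id = u"
    using abs_len_ex[OF ts0] by blast
  obtain ws where ws: "length ws = abs_len d n w" "set ws \<subseteq> reflections d n" "foldr (\<circ>) ws id = w"
    using abs_len_ex[OF ts1] by blast
  have lg: "abs_len d n (gam d n) = n" by (rule abs_len_gam[OF d n])
  have len: "length us + length ws = n"
    using ab lg us(1) ws(1) unfolding abs_le_def gg w_def by simp
  define ts where "ts = us @ ws"
  have tsR: "set ts \<subseteq> reflections d n" using us ws unfolding ts_def by auto
  have uw: "u \<circ> w = gam d n" unfolding w_def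
    by (simp add: comp_assoc[symmetric] ginv_right[OF d0 uG])
  have tsf: "foldr (\<circ>) ts id = gam d n" unfolding ts_def
    by (simp only: foldr_append_id us(3) ws(3) uw)
  have tsl: "length ts = n" using len unfolding ts_def by simp
  have solv: "\<forall>r. \<exists>z. \<forall>j<length ts. bt d n (ts ! j) z = r j"
    using gam_len[OF d n tsR tsf] tsl by simp
  define e1 where "e1 = (\<lambda>k::nat. if k = 1 then 1 else 0 :: complex)"
  obtain z where z: "\<forall>j<length ts. bt d n (ts ! j) z = (if j < length us then 0 else bt d n (ts ! j) e1)"
    using spec[OF solv, of "\<lambda>j. if j < length us then 0 else bt d n (ts ! j) e1"] by (elim exE) (rule that)
  have zus: "\<forall>t\<in>set us. bt d n t z = 0"
  proof
    fix t assume "t \<in> set us"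
    then obtain j where j: "j < length us" "t = us ! j" by (auto simp: in_set_conv_nth)
    have "ts ! j = t" using j unfolding ts_def by (simp add: nth_append)
    have jl: "j < length ts" using j unfolding ts_def by simp
    show "bt d n t z = 0" using z[rule_format, OF jl] j(1) \<open>ts ! j = t\<close> by simp
  qed
  define y where "y = (\<lambda>k. e1 k - z k)"
  have yws: "\<forall>t\<in>set ws. bt d n t y = 0"
  proof
    fix t assume "t \<in> set ws"
    then obtain j where j: "j < length ws" "t = ws ! j" by (auto simp: in_set_conv_nth)
    have tj: "ts ! (length us + j) = t" using j unfolding ts_def by (simp add: nth_append)
    have "length us + j < length ts" using j unfolding ts_def by simp
    hence "bt d n t z = bt d n t e1" using z[rule_format, of "length us + j"] tj by simp
    thus "bt d n t y = 0" unfolding y_def bt_diff by simp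
  qed
  have fz: "act d n u z k = z k" if "k \<in> {1..n}" for k
    using fix_lemma[OF d0 us(2) zus that] us(3) by simp
  have fy: "act d n w y k = y k" if "k \<in> {1..n}" for k
    using fix_lemma[OF d0 ws(2) yws that] ws(3) by simp
  have key: "act d n u e1 k = act d n (gam d n) y k + e1 k - y k" if k: "k \<in> {1..n}" for k
  proof -
    have g1: "act d n (gam d n) y k = act d n u y k"
    proof -
      have "act d n (gam d n) y k = act d n u (act d n w y) k"
        unfolding uw[symmetric] by (rule act_comp[OF d0 uG wG k])
      also have "\<dots> = act d n u y k" by (rule act_cong) (simp add: fy)
      finally show ?thesis .
    qed
    have "e1 = (\<lambda>j. y j + z j)" unfolding y_def by auto
    hence "act d n u e1 k = act d n u y k + act d n u z k" by (simp add: act_add)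
    also have "\<dots> = act d n (gam d n) y k + z k" using g1 fz[OF k] by simp
    finally show ?thesis unfolding y_def by simp
  qed
  have ae1: "act d n u e1 k = (if i = k then zeta d ^ s else 0)" if k: "k \<in> {1..n}" for k
  proof -
    have "act d n u e1 k = (\<Sum>j\<in>{1..n}. if j = 1 then gmat d u k j else 0)"
      unfolding act_def e1_def by (rule sum.cong) auto
    also have "\<dots> = gmat d u k 1" using n by simp
    also have "\<dots> = (if i = k then zeta d ^ s else 0)" using u1 by (simp add: gmat_def)
    finally show ?thesis .
  qed
  obtain \<sigma> c where sc: "\<sigma> permutes {1..n}" "(\<Sum>k\<in>{1..n}. c k) mod d = 0" "u = mkG d n \<sigma> c"
    by (rule G_mkG[OF uG])
  have s1: "\<sigma> 1 = i" "c 1 mod d = s" using u1 n d0 by (simp_all add: sc(3) mkG_in)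
  have azi: "act d n u z i = zeta d ^ s * z 1"
  proof -
    have "act d n u z i = zeta d ^ c 1 * z 1" unfolding sc(3)
    proof (rule act_mkG_single[OF d0 i])
      show "1 \<in> {1..n}" using n by simp
      show "\<forall>j\<in>{1..n}. \<sigma> j = i \<longleftrightarrow> j = 1"
        using s1(1) by (metis sc(1) permutes_inj inj_eq)
    qed
    thus ?thesis using zeta_pow_mod[OF d0, of "c 1"] s1(2) by simp
  qed
  have Zi: "z i = zeta d ^ s * z 1" using fz[OF i] azi by simp
  have Ek: "(if i = k then zeta d ^ s else 0) = y (k - 1) - y k" if "2 \<le> k" "k \<le> n - 1" for k
  proof -
    have k: "k \<in> {1..n}" using that by auto
    have "(if i = k then zeta d ^ s else 0) = act d n (gam d n) y k + e1 k - y k"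
      using key[OF k] ae1[OF k] by simp
    thus ?thesis using act_gam2[OF d that] that by (simp add: e1_def)
  qed
  have E1: "(if i = 1 then zeta d ^ s else 0) = zeta d * y (n - 1) + 1 - y 1"
  proof -
    have k: "1 \<in> {1..n}" using n by simp
    show ?thesis using key[OF k] ae1[OF k] act_gam1[OF d n] by (simp add: e1_def)
  qed
  have zne: "zeta d ^ s \<noteq> 1" if "0 < s"
    using zeta_pow_eq1[OF d0, of s] nat_dvd_not_less[OF that s] by simp
  from forb show False
  proof
    assume A: "i = 1 \<and> 2 \<le> s \<and> s < d"
    hence Ai: "i = 1" "2 \<le> s" "s < d" by auto
    have yc: "y k = y 1" if "1 \<le> k" "k \<le> n - 1" for k
    proof (rule chain_const[of 1 "n - 1" y, OF _ that])
      show "\<forall>k. 1 < k \<and> k \<le> n - 1 \<longrightarrow> y k = y (k - 1)"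
      proof (intro allI impI)
        fix k assume k: "1 < k \<and> k \<le> n - 1"
        hence "k \<noteq> i" "2 \<le> k" "k \<le> n - 1" using Ai by auto
        thus "y k = y (k - 1)" using Ek[of k] by simp
      qed
    qed
    have yn: "y (n - 1) = y 1" using yc[of "n - 1"] n by simp
    have "(zeta d ^ s - 1) * z 1 = 0" using Zi Ai by (simp add: algebra_simps)
    hence "z 1 = 0" using zne Ai by simp
    hence y1: "y 1 = 1" unfolding y_def e1_def by simp
    have "zeta d ^ s = zeta d ^ 1" using E1 Ai yn y1 by simp
    hence "s = 1" using zeta_pow_inj[of s d 1] Ai by simp
    thus False using Ai by simp
  next
    assume B: "2 \<le> i \<and> i < n \<and> 1 \<le> s \<and> s < d - 1"
    hence Bi: "2 \<le> i" "i < n" "1 \<le> s" "s < d - 1" by auto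
    have ylo: "y k = y 1" if "1 \<le> k" "k \<le> i - 1" for k
    proof (rule chain_const[of 1 "i - 1" y, OF _ that])
      show "\<forall>k. 1 < k \<and> k \<le> i - 1 \<longrightarrow> y k = y (k - 1)"
      proof (intro allI impI)
        fix k assume k: "1 < k \<and> k \<le> i - 1"
        hence "k \<noteq> i" "2 \<le> k" "k \<le> n - 1" using Bi by auto
        thus "y k = y (k - 1)" using Ek[of k] by simp
      qed
    qed
    have yi: "y i = y 1 - zeta d ^ s"
    proof -
      have "i \<le> n - 1" "2 \<le> i" using Bi by auto
      hence "zeta d ^ s = y (i - 1) - y i" using Ek[of i] by simp
      moreover have "y (i - 1) = y 1" using ylo[of "i - 1"] Bi by simp
      ultimately show ?thesis by (simp add: algebra_simps)
    qed
    have yhi: "y k = y i" if "i \<le> k" "k \<le> n - 1" for k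
    proof (rule chain_const[of i "n - 1" y, OF _ that])
      show "\<forall>k. i < k \<and> k \<le> n - 1 \<longrightarrow> y k = y (k - 1)"
      proof (intro allI impI)
        fix k assume k: "i < k \<and> k \<le> n - 1"
        hence "k \<noteq> i" "2 \<le> k" "k \<le> n - 1" using Bi by auto
        thus "y k = y (k - 1)" using Ek[of k] by simp
      qed
    qed
    have yn: "y (n - 1) = y 1 - zeta d ^ s" using yhi[of "n - 1"] yi Bi by simp
    have "- y i = zeta d ^ s * (1 - y 1)" using Zi Bi unfolding y_def e1_def by simp
    hence "y 1 * (zeta d ^ s - 1) = 0" using yi by (simp add: algebra_simps)
    hence y1: "y 1 = 0" using zne Bi by simp
    have "0 = zeta d * (0 - zeta d ^ s) + 1" using E1 Bi yn y1 by simp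
    hence "zeta d ^ Suc s = 1" by (simp add: algebra_simps)
    hence "d dvd Suc s" using zeta_pow_eq1[OF d0, of "Suc s"] by simp
    moreover have "0 < Suc s" "Suc s < d" using Bi by auto
    ultimately show False using nat_dvd_not_less by blast
  qed
qed

theorem lemma3p8:
  fixes d n i s :: nat
  assumes "d \<ge> 2" and "n \<ge> 2" and "i \<in> {1..n}" and "s < d"
  shows "Rset d n i s = {} \<longleftrightarrow>
           ((i = 1 \<and> 2 \<le> s \<and> s < d) \<or> (2 \<le> i \<and> i < n \<and> 1 \<le> s \<and> s < d - 1))"
proof
  assume "Rset d n i s = {}"
  thus "(i = 1 \<and> 2 \<le> s \<and> s < d) \<or> (2 \<le> i \<and> i < n \<and> 1 \<le> s \<and> s < d - 1)"
    using nonempty[OF assms] by blast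
next
  assume f: "(i = 1 \<and> 2 \<le> s \<and> s < d) \<or> (2 \<le> i \<and> i < n \<and> 1 \<le> s \<and> s < d - 1)"
  show "Rset d n i s = {}"
  proof (rule ccontr)
    assume "Rset d n i s \<noteq> {}"
    then obtain u where "u \<in> NC d n" "u (1, 0) = (i, s)" unfolding Rset_def by blast
    thus False using emptiness[OF assms(1,2) _ _ assms(3,4) f] by blast
  qed
qed


end
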